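(* Let $\mathcal H_A,\mathcal H_B$ be finite-dimensional Hilbert spaces, $|0_A\rangle\in\mathcal H_A$, $|0_B\rangle\in\mathcal H_B$ unit vectors, $|0\rangle=|0_A\rangle\otimes|0_B\rangle$, and let $|\phi\rangle\in\mathcal H_A\otimes\mathcal H_B$ be a unit vector. Decompose $|\phi\rangle=|x\rangle\otimes|0_B\rangle+|y\rangle$ with $|x\rangle=(\mathbb 1_A\otimes\langle 0_B|)|\phi\rangle$ and $(\mathbb 1_A\otimes\langle 0_B|)|y\rangle=0$, and assume $|y\rangle\neq0$. Fix $0<\epsilon<1$, let $|\psi\rangle=(|0\rangle+\epsilon|\phi\rangle)/\sqrt{\mathcal N}$ with $\mathcal N=1+\epsilon^2+2\epsilon\,\mathrm{Re}\langle0|\phi\rangle$, $\rho_A=\operatorname{tr}_B|\psi\rangle\langle\psi|$, $\mu=\epsilon^2\langle y|y\rangle/\mathcal N$ and $\omega=\operatorname{tr}_B|y\rangle\langle y|/\langle y|y\rangle$. Then for every $0<\alpha<1$, $$\mu^\alpha\operatorname{tr}\omega^\alpha\le\operatorname{tr}\rho_A^\alpha\le(1-\mu)^\alpha+\mu^\alpha\operatorname{tr}\omega^\alpha,$$ equivalently $$S_\alpha(\omega)+\frac{\alpha}{1-\alpha}\log\mu\le S_\alpha(\rho_A)\le\frac{1}{1-\alpha}\log\Big[(1-\mu)^\alpha+\mu^\alpha e^{(1-\alpha)S_\alpha(\omega)}\Big].$$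
   Context: $S_\alpha(\rho)=\frac{1}{1-\alpha}\log\operatorname{tr}\rho^\alpha$. One has $\rho_A=(1-\mu)|v\rangle\langle v|+\mu\,\omega$ with $|v\rangle=(|0_A\rangle+\epsilon|x\rangle)/\sqrt{\mathcal N(1-\mu)}$ a unit vector. *)

theory Defs
  imports "Jordan_Normal_Form.Char_Poly"
begin

text \<open>Finite-dimensional Hilbert spaces H_A = C^n, H_B = C^m, H_A (x) H_B = C^(n*m),
  with the basis vector e_i (x) e_j of the tensor product identified with e_(i*m+j).\<close>

definition cinner :: "complex vec \<Rightarrow> complex vec \<Rightarrow> complex" where
  "cinner u v = (\<Sum>i<dim_vec v. cnj (u $ i) * v $ i)"

definition vnorm2 :: "complex vec \<Rightarrow> real" where
  "vnorm2 u = Re (cinner u u)"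

definition vtensor :: "complex vec \<Rightarrow> complex vec \<Rightarrow> complex vec" where
  "vtensor u v = vec (dim_vec u * dim_vec v) (\<lambda>k. u $ (k div dim_vec v) * v $ (k mod dim_vec v))"

text \<open>(1_A (x) <b|) applied to a vector w of H_A (x) H_B, with dim H_A = n, b in H_B.\<close>
definition contract_B :: "nat \<Rightarrow> complex vec \<Rightarrow> complex vec \<Rightarrow> complex vec" where
  "contract_B n b w = vec n (\<lambda>i. \<Sum>j<dim_vec b. cnj (b $ j) * w $ (i * dim_vec b + j))"

text \<open>tr_B |u><v| for u,v in H_A (x) H_B with dim H_A = n, dim H_B = m.\<close>
definition ptrace_B_outer :: "nat \<Rightarrow> nat \<Rightarrow> complex vec \<Rightarrow> complex vec \<Rightarrow> complex mat" where
  "ptrace_B_outer n m u v = mat n n (\<lambda>(i, i'). \<Sum>j<m. u $ (i * m + j) * cnj (v $ (i' * m + j)))"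

text \<open>tr rho^alpha for a (positive semidefinite) matrix: sum of lambda^alpha over the
  eigenvalues counted with algebraic multiplicity.\<close>
definition tr_pow :: "real \<Rightarrow> complex mat \<Rightarrow> real" where
  "tr_pow \<alpha> \<rho> = (\<Sum>z \<in># proots (char_poly \<rho>). Re z powr \<alpha>)"

definition renyi :: "real \<Rightarrow> complex mat \<Rightarrow> real" where
  "renyi \<alpha> \<rho> = ln (tr_pow \<alpha> \<rho>) / (1 - \<alpha>)"

end

theory Submission
  imports Defs "Jordan_Normal_Form.Schur_Decomposition" "HOL-Library.Multiset"
begin

lemma linsys:
  fixes f :: "'i \<Rightarrow> 'j \<Rightarrow> complex"
  assumes "finite I" "finite J" "card I < card J"
  shows "\<exists>c. (\<exists>j\<in>J. c j \<noteq> 0) \<and> (\<forall>i\<in>I. (\<Sum>j\<in>J. f i j * c j) = 0)"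
  using assms
proof (induction I arbitrary: J f rule: finite_induct)
  case empty
  then obtain j where "j \<in> J" by fastforce
  then show ?case by (intro exI[of _ "\<lambda>_. 1"]) auto
next
  case (insert i I)
  show ?case
  proof (cases "\<forall>j\<in>J. f i j = 0")
    case True
    have "card I < card J" using insert by simp
    from insert.IH[OF insert.prems(1) this, of f] obtain c where
      c: "\<exists>j\<in>J. c j \<noteq> 0" "\<forall>i\<in>I. (\<Sum>j\<in>J. f i j * c j) = 0" by blast
    then show ?thesis using True by (intro exI[of _ c]) auto
  next
    case False
    then obtain j0 where j0: "j0 \<in> J" "f i j0 \<noteq> 0" by blast
    let ?J = "J - {j0}"
    define g where "g i' j = f i' j - f i' j0 * f i j / f i j0" for i' j
    have "card I < card ?J" using insert j0 by (simp add: card_Diff_singleton)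
    from insert.IH[OF _ this, of g] insert.prems obtain c where
      c: "\<exists>j\<in>?J. c j \<noteq> 0" "\<forall>i\<in>I. (\<Sum>j\<in>?J. g i j * c j) = 0" by auto
    define c' where "c' = c(j0 := - (\<Sum>j\<in>?J. f i j * c j) / f i j0)"
    have split: "(\<Sum>j\<in>J. h j * c' j) = h j0 * c' j0 + (\<Sum>j\<in>?J. h j * c j)" for h
    proof -
      have "(\<Sum>j\<in>J. h j * c' j) = h j0 * c' j0 + (\<Sum>j\<in>?J. h j * c' j)"
        using j0 insert.prems by (simp add: sum.remove)
      also have "(\<Sum>j\<in>?J. h j * c' j) = (\<Sum>j\<in>?J. h j * c j)"
        by (intro sum.cong) (auto simp: c'_def)
      finally show ?thesis .
    qed
    have eqi: "(\<Sum>j\<in>J. f i j * c' j) = 0"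
      unfolding split using j0 by (simp add: c'_def)
    have eqI: "(\<Sum>j\<in>J. f i' j * c' j) = 0" if i': "i' \<in> I" for i'
    proof -
      have "(\<Sum>j\<in>J. f i' j * c' j) = f i' j0 * c' j0 + (\<Sum>j\<in>?J. f i' j * c j)" by (rule split)
      also have "f i' j0 * c' j0 = (\<Sum>j\<in>?J. - (f i' j0 * f i j / f i j0) * c j)"
        by (simp add: c'_def sum_distrib_left sum_divide_distrib sum_negf algebra_simps)
      also have "\<dots> + (\<Sum>j\<in>?J. f i' j * c j) = (\<Sum>j\<in>?J. g i' j * c j)"
        by (simp add: g_def sum.distrib[symmetric] algebra_simps)
      also have "\<dots> = 0" using c i' by auto
      finally show ?thesis .
    qed
    have nz: "\<exists>j\<in>J. c' j \<noteq> 0" using c(1) by (auto simp: c'_def)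
    show ?thesis using eqi eqI nz by (intro exI[of _ c']) auto
  qed
qed

lemma powr_ge_self:
  fixes x a :: real
  assumes "0 \<le> x" "x \<le> 1" "a \<le> 1"
  shows "x \<le> x powr a"
proof (cases "x = 0")
  case True then show ?thesis by simp
next
  case False
  then have "x powr 1 \<le> x powr a" using powr_mono'[OF assms(3) assms(1,2)] by simp
  then show ?thesis using False assms by simp
qed

lemma powr_subadd:
  fixes d e a :: real
  assumes "0 \<le> d" "0 \<le> e" "0 < a" "a < 1"
  shows "(d + e) powr a \<le> d powr a + e powr a"
proof (cases "d + e = 0")
  case True then show ?thesis using assms by simp
next
  case False
  let ?T = "d + e"
  have T: "?T > 0" using False assms by simp
  have h1: "d / ?T \<le> (d / ?T) powr a"
    using assms T by (intro powr_ge_self) auto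
  have h2: "e / ?T \<le> (e / ?T) powr a"
    using assms T by (intro powr_ge_self) auto
  have "1 = d / ?T + e / ?T" using T by (simp add: add_divide_distrib[symmetric])
  also have "\<dots> \<le> (d / ?T) powr a + (e / ?T) powr a" using h1 h2 by simp
  also have "\<dots> = (d powr a + e powr a) / ?T powr a"
    using assms T by (simp add: powr_divide add_divide_distrib)
  finally have "?T powr a \<le> d powr a + e powr a"
    using T by (simp add: field_simps)
  then show ?thesis .
qed

lemma powr_incr_decr:
  fixes s d e a :: real
  assumes "0 \<le> s" "s \<le> d" "0 \<le> e" "0 < a" "a < 1"
  shows "(d + e) powr a - d powr a \<le> (s + e) powr a - s powr a"
proof (cases "s = 0")
  case True
  then show ?thesis using powr_subadd[of d e a] assms by simp
next
  case False
  then have s: "s > 0" using assms by simp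
  let ?g = "\<lambda>x. (x + e) powr a - x powr a"
  have "?g d \<le> ?g s"
  proof (rule DERIV_nonpos_imp_nonincreasing[of s d ?g])
    show "s \<le> d" by fact
    fix x assume x: "s \<le> x" "x \<le> d"
    then have x0: "x > 0" using s by simp
    have xe: "x + e > 0" using x0 assms by simp
    have D1: "((\<lambda>x. (x + e) powr a) has_real_derivative a * (x + e) powr (a - 1) * 1) (at x)"
      using has_real_derivative_powr[OF xe, of a] DERIV_shift[of "\<lambda>z. z powr a"] by simp
    have D: "(?g has_real_derivative (a * (x + e) powr (a - 1) * 1 - a * x powr (a - 1))) (at x)"
      by (intro DERIV_diff D1 has_real_derivative_powr x0)
    have "(x + e) powr (a - 1) \<le> x powr (a - 1)"
      using assms x0 by (intro powr_mono2') auto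
    then have "a * (x + e) powr (a - 1) * 1 - a * x powr (a - 1) \<le> 0"
      using assms by (simp add: mult_left_mono)
    with D show "\<exists>y. (?g has_real_derivative y) (at x) \<and> y \<le> 0" by blast
  qed
  then show ?thesis by simp
qed

lemma interlace1:
  fixes ds rs :: "real list"
  assumes "sorted ds" "sorted rs" "length ds = n" "length rs = n"
    and c: "\<And>t. card {j. j < n \<and> t < ds ! j} \<le> card {j. j < n \<and> t < rs ! j}"
    and i: "i < n"
  shows "ds ! i \<le> rs ! i"
proof (rule ccontr)
  assume "\<not> ds ! i \<le> rs ! i"
  then have lt: "rs ! i < ds ! i" by simp
  let ?t = "rs ! i"
  have s1: "{i..<n} \<subseteq> {j. j < n \<and> ?t < ds ! j}"
  proof
    fix j assume "j \<in> {i..<n}"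
    then have "ds ! i \<le> ds ! j" "j < n" using assms by (auto intro: sorted_nth_mono)
    then show "j \<in> {j. j < n \<and> ?t < ds ! j}" using lt by auto
  qed
  have s2: "{j. j < n \<and> ?t < rs ! j} \<subseteq> {Suc i..<n}"
  proof
    fix j assume j: "j \<in> {j. j < n \<and> ?t < rs ! j}"
    have "\<not> j \<le> i"
    proof
      assume "j \<le> i"
      then have "rs ! j \<le> rs ! i" using assms by (auto intro: sorted_nth_mono)
      then show False using j by auto
    qed
    then show "j \<in> {Suc i..<n}" using j by auto
  qed
  have "n - i \<le> card {j. j < n \<and> ?t < ds ! j}"
    using card_mono[OF _ s1] by auto
  also have "\<dots> \<le> card {j. j < n \<and> ?t < rs ! j}" by (rule c)
  also have "\<dots> \<le> n - Suc i" using card_mono[OF _ s2] by auto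
  finally show False using i by simp
qed

lemma interlace2:
  fixes ds rs :: "real list"
  assumes "sorted ds" "sorted rs" "length ds = n" "length rs = n"
    and c: "\<And>t. card {j. j < n \<and> t < rs ! j} \<le> card {j. j < n \<and> t < ds ! j} + 1"
    and i: "Suc i < n"
  shows "rs ! i \<le> ds ! Suc i"
proof (rule ccontr)
  assume "\<not> rs ! i \<le> ds ! Suc i"
  then have lt: "ds ! Suc i < rs ! i" by simp
  let ?t = "ds ! Suc i"
  have s1: "{i..<n} \<subseteq> {j. j < n \<and> ?t < rs ! j}"
  proof
    fix j assume "j \<in> {i..<n}"
    then have "rs ! i \<le> rs ! j" "j < n" using assms by (auto intro: sorted_nth_mono)
    then show "j \<in> {j. j < n \<and> ?t < rs ! j}" using lt by auto
  qed
  have s2: "{j. j < n \<and> ?t < ds ! j} \<subseteq> {Suc (Suc i)..<n}"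
  proof
    fix j assume j: "j \<in> {j. j < n \<and> ?t < ds ! j}"
    have "\<not> j \<le> Suc i"
    proof
      assume "j \<le> Suc i"
      then have "ds ! j \<le> ds ! Suc i" using assms i by (auto intro: sorted_nth_mono)
      then show False using j by auto
    qed
    then show "j \<in> {Suc (Suc i)..<n}" using j by auto
  qed
  have "n - i \<le> card {j. j < n \<and> ?t < rs ! j}"
    using card_mono[OF _ s1] by auto
  also have "\<dots> \<le> card {j. j < n \<and> ?t < ds ! j} + 1" by (rule c)
  also have "\<dots> \<le> n - Suc (Suc i) + 1" using card_mono[OF _ s2] by auto
  finally show False using i by simp
qed

lemma sorted_sum_ineq:
  fixes D R :: "nat \<Rightarrow> real"
  assumes D0: "\<And>i. i < n \<Longrightarrow> 0 \<le> D i"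
    and DR: "\<And>i. i < n \<Longrightarrow> D i \<le> R i"
    and RD: "\<And>i. Suc i < n \<Longrightarrow> R i \<le> D (Suc i)"
    and a: "0 < a" "a < 1"
  shows "(\<Sum>i<n. R i powr a) \<le> (\<Sum>i<n. D i powr a) + ((\<Sum>i<n. R i) - (\<Sum>i<n. D i)) powr a"
proof -
  define S where "S k = (\<Sum>i<k. R i - D i)" for k
  have S0: "S k \<ge> 0" if "k \<le> n" for k
    unfolding S_def using DR that by (intro sum_nonneg) auto
  have SD: "k < n \<Longrightarrow> S k \<le> D k - D 0" for k
  proof (induction k)
    case 0 then show ?case by (simp add: S_def)
  next
    case (Suc k)
    then have "S k \<le> D k - D 0" by simp
    moreover have "S (Suc k) = S k + (R k - D k)" by (simp add: S_def)
    moreover have "R k \<le> D (Suc k)" using RD Suc by simp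
    ultimately show ?case by simp
  qed
  have trm: "R k powr a - D k powr a \<le> S (Suc k) powr a - S k powr a" if k: "k < n" for k
  proof -
    have "S k \<le> D k" using SD[OF k] D0[of 0] k by simp
    then have "(D k + (R k - D k)) powr a - D k powr a \<le> (S k + (R k - D k)) powr a - S k powr a"
      using S0[of k] k DR[OF k] a by (intro powr_incr_decr) auto
    moreover have "S (Suc k) = S k + (R k - D k)" by (simp add: S_def)
    ultimately show ?thesis by simp
  qed
  have "(\<Sum>i<n. R i powr a) - (\<Sum>i<n. D i powr a) = (\<Sum>i<n. R i powr a - D i powr a)"
    by (simp add: sum_subtractf)
  also have "\<dots> \<le> (\<Sum>i<n. S (Suc i) powr a - S i powr a)"
    using trm by (intro sum_mono) auto
  also have "\<dots> = S n powr a - S 0 powr a" by (rule sum_lessThan_telescope)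
  also have "\<dots> = ((\<Sum>i<n. R i) - (\<Sum>i<n. D i)) powr a"
    by (simp add: S_def sum_subtractf)
  finally show ?thesis by simp
qed

lemma sum_sort_eq:
  fixes f :: "real \<Rightarrow> real"
  shows "(\<Sum>i<n. f (sort (map d [0..<n]) ! i)) = (\<Sum>i<n. f (d i))"
proof -
  let ?xs = "map d [0..<n]"
  have "(\<Sum>i<n. f (sort ?xs ! i)) = sum_list (map f (sort ?xs))"
    by (simp add: sum_list_sum_nth atLeast0LessThan)
  also have "\<dots> = sum_list (map f ?xs)"
    by (metis mset_map mset_sort sum_mset_sum_list)
  also have "\<dots> = (\<Sum>i<n. f (d i))"
    by (simp add: sum_list_sum_nth atLeast0LessThan)
  finally show ?thesis .
qed

lemma card_sort_eq:
  shows "card {j. j < n \<and> P (sort (map d [0..<n]) ! j)} = card {j. j < n \<and> P (d j)}"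
proof -
  let ?xs = "map d [0..<n]"
  have "card {j. j < n \<and> P (sort ?xs ! j)} = length (filter P (sort ?xs))"
    by (simp add: length_filter_conv_card)
  also have "\<dots> = length (filter P ?xs)"
    by (metis mset_filter mset_sort size_mset)
  also have "\<dots> = card {j. j < n \<and> P (map d [0..<n] ! j)}"
    by (simp add: length_filter_conv_card)
  also have "{j. j < n \<and> P (map d [0..<n] ! j)} = {j. j < n \<and> P (d j)}"
    by auto
  finally show ?thesis .
qed

lemma scalar_main:
  fixes d r :: "nat \<Rightarrow> real"
  assumes d0: "\<And>i. i < n \<Longrightarrow> 0 \<le> d i"
    and c1: "\<And>t. card {i. i < n \<and> t < d i} \<le> card {i. i < n \<and> t < r i}"
    and c2: "\<And>t. card {i. i < n \<and> t < r i} \<le> card {i. i < n \<and> t < d i} + 1"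
    and a: "0 < a" "a < 1"
  shows "(\<Sum>i<n. d i powr a) \<le> (\<Sum>i<n. r i powr a)"
    and "(\<Sum>i<n. r i powr a) \<le> (\<Sum>i<n. d i powr a) + ((\<Sum>i<n. r i) - (\<Sum>i<n. d i)) powr a"
proof -
  define ds where "ds = sort (map d [0..<n])"
  define rs where "rs = sort (map r [0..<n])"
  have L: "length ds = n" "length rs = n" "sorted ds" "sorted rs" by (auto simp: ds_def rs_def)
  have C1: "card {j. j < n \<and> t < ds ! j} \<le> card {j. j < n \<and> t < rs ! j}" for t
    unfolding ds_def rs_def card_sort_eq[where P = "\<lambda>x. t < x"] using c1 .
  have C2: "card {j. j < n \<and> t < rs ! j} \<le> card {j. j < n \<and> t < ds ! j} + 1" for t
    unfolding ds_def rs_def card_sort_eq[where P = "\<lambda>x. t < x"] using c2 .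
  have I1: "ds ! i \<le> rs ! i" if "i < n" for i using interlace1[OF L(3,4,1,2) C1 that] .
  have I2: "rs ! i \<le> ds ! Suc i" if "Suc i < n" for i using interlace2[OF L(3,4,1,2) C2 that] .
  have D0: "0 \<le> ds ! i" if "i < n" for i
  proof -
    have "ds ! i \<in> set ds" using L that by simp
    then show ?thesis using d0 by (auto simp: ds_def)
  qed
  have E1: "(\<Sum>i<n. f (ds ! i)) = (\<Sum>i<n. f (d i))" for f :: "real \<Rightarrow> real"
    unfolding ds_def by (rule sum_sort_eq)
  have E2: "(\<Sum>i<n. f (rs ! i)) = (\<Sum>i<n. f (r i))" for f :: "real \<Rightarrow> real"
    unfolding rs_def by (rule sum_sort_eq)
  have "(\<Sum>i<n. ds ! i powr a) \<le> (\<Sum>i<n. rs ! i powr a)"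
    using I1 D0 a by (intro sum_mono powr_mono2) auto
  then show "(\<Sum>i<n. d i powr a) \<le> (\<Sum>i<n. r i powr a)"
    using E1[of "\<lambda>x. x powr a"] E2[of "\<lambda>x. x powr a"] by simp
  have "(\<Sum>i<n. rs ! i powr a) \<le> (\<Sum>i<n. ds ! i powr a) + ((\<Sum>i<n. rs ! i) - (\<Sum>i<n. ds ! i)) powr a"
    using sorted_sum_ineq[of n "\<lambda>i. ds ! i" "\<lambda>i. rs ! i" a] D0 I1 I2 a by auto
  then show "(\<Sum>i<n. r i powr a) \<le> (\<Sum>i<n. d i powr a) + ((\<Sum>i<n. r i) - (\<Sum>i<n. d i)) powr a"
    using E1[of "\<lambda>x. x powr a"] E2[of "\<lambda>x. x powr a"] E1[of "\<lambda>x. x"] E2[of "\<lambda>x. x"] by simp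
qed

definition adj :: "complex mat \<Rightarrow> complex mat" where
  "adj A = mat (dim_col A) (dim_row A) (\<lambda>(i, j). cnj (A $$ (j, i)))"

definition diagm :: "nat \<Rightarrow> (nat \<Rightarrow> real) \<Rightarrow> complex mat" where
  "diagm n x = mat n n (\<lambda>(i, j). if i = j then complex_of_real (x i) else 0)"

definition eigdec :: "nat \<Rightarrow> complex mat \<Rightarrow> complex mat \<Rightarrow> (nat \<Rightarrow> real) \<Rightarrow> bool" where
  "eigdec n A U x \<longleftrightarrow> U \<in> carrier_mat n n \<and> adj U * U = 1\<^sub>m n \<and> U * adj U = 1\<^sub>m n
     \<and> A = U * diagm n x * adj U"

lemma adj_carrier[simp]: "A \<in> carrier_mat n m \<Longrightarrow> adj A \<in> carrier_mat m n"
  by (auto simp: adj_def)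

lemma adj_dims[simp]: "dim_row (adj A) = dim_col A" "dim_col (adj A) = dim_row A"
  by (auto simp: adj_def)

lemma adj_index[simp]: "i < dim_col A \<Longrightarrow> j < dim_row A \<Longrightarrow> adj A $$ (i, j) = cnj (A $$ (j, i))"
  by (auto simp: adj_def)

lemma diagm_carrier[simp]: "diagm n x \<in> carrier_mat n n"
  by (auto simp: diagm_def)

lemma diagm_dims[simp]: "dim_row (diagm n x) = n" "dim_col (diagm n x) = n"
  by (auto simp: diagm_def)

lemma mult_entry:
  assumes "A \<in> carrier_mat n k" "B \<in> carrier_mat k m" "i < n" "j < m"
  shows "(A * B) $$ (i, j) = (\<Sum>l<k. A $$ (i, l) * B $$ (l, j))"
  using assms by (simp add: scalar_prod_def atLeast0LessThan)

lemma dec_entry: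
  assumes U: "U \<in> carrier_mat n n" and ij: "i < n" "j < n"
  shows "(U * diagm n x * adj U) $$ (i, j) = (\<Sum>k<n. U $$ (i, k) * x k * cnj (U $$ (j, k)))"
proof -
  have UD: "(U * diagm n x) $$ (i, k) = U $$ (i, k) * x k" if "k < n" "i < n" for i k
  proof -
    have "(U * diagm n x) $$ (i, k) = (\<Sum>l<n. U $$ (i, l) * diagm n x $$ (l, k))"
      using U that by (intro mult_entry) auto
    also have "\<dots> = (\<Sum>l<n. if l = k then U $$ (i, l) * x l else 0)"
      using that by (intro sum.cong) (auto simp: diagm_def)
    also have "\<dots> = U $$ (i, k) * x k" using that by simp
    finally show ?thesis .
  qed
  have "(U * diagm n x * adj U) $$ (i, j) = (\<Sum>k<n. (U * diagm n x) $$ (i, k) * adj U $$ (k, j))"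
    using U ij by (intro mult_entry) auto
  also have "\<dots> = (\<Sum>k<n. U $$ (i, k) * x k * cnj (U $$ (j, k)))"
    using U ij UD by (intro sum.cong) auto
  finally show ?thesis .
qed

lemma adjU_U_entry:
  assumes U: "U \<in> carrier_mat n n" and ij: "i < n" "j < n"
  shows "(adj U * U) $$ (i, j) = (\<Sum>k<n. cnj (U $$ (k, i)) * U $$ (k, j))"
  using assms by (subst mult_entry[of _ n n]) auto

lemma U_adjU_entry:
  assumes U: "U \<in> carrier_mat n n" and ij: "i < n" "j < n"
  shows "(U * adj U) $$ (i, j) = (\<Sum>k<n. U $$ (i, k) * cnj (U $$ (j, k)))"
  using assms by (subst mult_entry[of _ n n]) auto

lemma adj_mult:
  assumes A: "A \<in> carrier_mat n k" and B: "B \<in> carrier_mat k m"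
  shows "adj (A * B) = adj B * adj A"
proof (rule eq_matI)
  fix i j assume ij: "i < dim_row (adj B * adj A)" "j < dim_col (adj B * adj A)"
  then have i: "i < m" and j: "j < n" using A B by auto
  have "adj (A * B) $$ (i, j) = cnj ((A * B) $$ (j, i))" using A B i j by simp
  also have "\<dots> = cnj (\<Sum>l<k. A $$ (j, l) * B $$ (l, i))" using A B i j by (subst mult_entry[of _ n k _ m]) auto
  also have "\<dots> = (\<Sum>l<k. adj B $$ (i, l) * adj A $$ (l, j))"
    using A B i j by (simp add: mult.commute)
  also have "\<dots> = (adj B * adj A) $$ (i, j)"
    using A B i j by (subst mult_entry[of _ m k _ n]) auto
  finally show "adj (A * B) $$ (i, j) = (adj B * adj A) $$ (i, j)" .
qed (use A B in auto)

lemma adj_adj[simp]: "adj (adj A) = A"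
  by (rule eq_matI) (auto simp: adj_def)

lemma adj_one[simp]: "adj (1\<^sub>m n) = 1\<^sub>m n"
  by (rule eq_matI) (auto simp: adj_def)

lemma cinner_cnj: "dim_vec u = dim_vec w \<Longrightarrow> cinner u w = cnj (cinner w u)"
  by (simp add: cinner_def mult.commute)

lemma cinner_smult_right: "cinner u (c \<cdot>\<^sub>v w) = c * cinner u w"
  by (simp add: cinner_def sum_distrib_left algebra_simps)

lemma cinner_smult_left: "dim_vec u = dim_vec w \<Longrightarrow> cinner (c \<cdot>\<^sub>v u) w = cnj c * cinner u w"
  by (simp add: cinner_def sum_distrib_left algebra_simps)

lemma cinner_self: "cinner u u = complex_of_real (\<Sum>i<dim_vec u. (cmod (u $ i))\<^sup>2)"
  unfolding cinner_def by (simp add: complex_mult_cnj cmod_def mult.commute)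

lemma cinner_self_zero:
  assumes "u \<in> carrier_vec n" "cinner u u = 0" shows "u = 0\<^sub>v n"
proof -
  have "(\<Sum>i<n. (cmod (u $ i))\<^sup>2) = 0" using arg_cong[OF cinner_self[of u], of Re] assms by simp
  then have "\<forall>i\<in>{..<n}. (cmod (u $ i))\<^sup>2 = 0" by (subst sum_nonneg_eq_0_iff[symmetric]) auto
  then show ?thesis using assms by (intro eq_vecI) auto
qed

lemma cinner_mult_adj:
  assumes A: "A \<in> carrier_mat n k" and u: "u \<in> carrier_vec n" and w: "w \<in> carrier_vec k"
  shows "cinner u (A *\<^sub>v w) = cinner (adj A *\<^sub>v u) w"
proof -
  have "cinner u (A *\<^sub>v w) = (\<Sum>i<n. cnj (u $ i) * (\<Sum>j<k. A $$ (i, j) * w $ j))"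
    using A u w by (simp add: cinner_def scalar_prod_def atLeast0LessThan)
  also have "\<dots> = (\<Sum>i<n. \<Sum>j<k. cnj (u $ i) * A $$ (i, j) * w $ j)"
    by (simp add: sum_distrib_left mult.assoc)
  also have "\<dots> = (\<Sum>j<k. \<Sum>i<n. cnj (u $ i) * A $$ (i, j) * w $ j)"
    by (rule sum.swap)
  also have "\<dots> = (\<Sum>j<k. cnj (\<Sum>i<n. cnj (A $$ (i, j)) * u $ i) * w $ j)"
    by (simp add: sum_distrib_left sum_distrib_right mult_ac)
  also have "\<dots> = cinner (adj A *\<^sub>v u) w"
    using A u w by (simp add: cinner_def scalar_prod_def atLeast0LessThan)
  finally show ?thesis .
qed

lemma adjmult_entry:
  assumes B: "B \<in> carrier_mat k n" and C: "C \<in> carrier_mat k m" and ij: "i < n" "j < m"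
  shows "(adj B * C) $$ (i, j) = cinner (col B i) (col C j)"
  using assms by (subst mult_entry[of _ n k _ m]) (auto simp: cinner_def)

lemma scalar_prod_conj_cinner:
  assumes "dim_vec u = dim_vec w"
  shows "w \<bullet>c u = cinner u w"
  using assms by (simp add: scalar_prod_def cinner_def atLeast0LessThan mult.commute)

lemma herm_entry:
  assumes "A \<in> carrier_mat n n" "adj A = A" "i < n" "j < n"
  shows "A $$ (i, j) = cnj (A $$ (j, i))"
proof -
  have "adj A $$ (i, j) = cnj (A $$ (j, i))" using assms(1,3,4) by simp
  with assms(2) show ?thesis by simp
qed

lemma cinner_self_real: "cinner u u = complex_of_real (vnorm2 u)"
  unfolding vnorm2_def cinner_self[of u] by simp

lemma orthonormal_basis:
  assumes v: "v \<in> carrier_vec n" and v0: "v \<noteq> 0\<^sub>v n"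
  shows "\<exists>W c. W \<in> carrier_mat n n \<and> adj W * W = 1\<^sub>m n \<and> W * adj W = 1\<^sub>m n \<and> col W 0 = c \<cdot>\<^sub>v v"
proof -
  interpret cof_vec_space n "TYPE(complex)" .
  have n: "n \<noteq> 0" using v v0 by (auto intro!: eq_vecI)
  define b where "b = basis_completion v"
  from basis_completion[OF v v0, folded b_def]
  have dist_b: "distinct b" and indep: "\<not> lin_dep (set b)" and b: "set b \<subseteq> carrier_vec n"
    and hdb: "hd b = v" and len_b: "length b = n" by auto
  from hdb len_b n obtain vs where bv: "b = v # vs" by (cases b, auto)
  define ws where "ws = gram_schmidt n b"
  from gram_schmidt_result[OF b dist_b indep refl, folded ws_def]
  have ws: "set ws \<subseteq> carrier_vec n" "corthogonal ws" "length ws = n"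
    by (auto simp: len_b)
  from gram_schmidt_hd[OF v, of vs, folded bv] have hdws: "hd ws = v" unfolding ws_def .
  have ws0: "ws ! 0 = v" using hdws ws(3) n by (cases ws) auto
  have wsc: "ws ! i \<in> carrier_vec n" if "i < n" for i using ws that by auto
  define nr where "nr i = vnorm2 (ws ! i)" for i
  have inner: "cinner (ws ! i) (ws ! j) = (if i = j then complex_of_real (nr i) else 0)"
    if ij: "i < n" "j < n" for i j
  proof -
    have "cinner (ws ! i) (ws ! j) = ws ! j \<bullet>c ws ! i"
      using wsc[OF ij(1)] wsc[OF ij(2)] by (simp add: scalar_prod_conj_cinner)
    moreover have "ws ! j \<bullet>c ws ! i = 0 \<longleftrightarrow> j \<noteq> i" using ws ij by (auto simp: corthogonal_def)
    ultimately show ?thesis by (auto simp: nr_def cinner_self_real)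
  qed
  have nrpos: "nr i > 0" if i: "i < n" for i
  proof -
    have "ws ! i \<bullet>c ws ! i \<noteq> 0" using ws(2) ws(3) i by (auto simp: corthogonal_def)
    then have "cinner (ws ! i) (ws ! i) \<noteq> 0" using scalar_prod_conj_cinner[of "ws ! i" "ws ! i"] by simp
    then have "nr i \<noteq> 0" by (simp add: nr_def cinner_self_real)
    moreover have "nr i \<ge> 0" unfolding nr_def vnorm2_def cinner_self by (simp add: sum_nonneg)
    ultimately show ?thesis by simp
  qed
  define W where "W = mat n n (\<lambda>(k, i). ws ! i $ k / complex_of_real (sqrt (nr i)))"
  have W: "W \<in> carrier_mat n n" by (simp add: W_def)
  have colW: "col W i = (1 / complex_of_real (sqrt (nr i))) \<cdot>\<^sub>v ws ! i" if i: "i < n" for i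
    using wsc[OF i] i by (intro eq_vecI) (auto simp: W_def)
  have WW: "adj W * W = 1\<^sub>m n"
  proof (rule eq_matI)
    fix i j assume "i < dim_row (1\<^sub>m n)" "j < dim_col (1\<^sub>m n)"
    then have ij: "i < n" "j < n" by auto
    have "(adj W * W) $$ (i, j) = cinner (col W i) (col W j)" using W ij by (intro adjmult_entry) auto
    also have "\<dots> = cnj (1 / complex_of_real (sqrt (nr i))) * (1 / complex_of_real (sqrt (nr j)))
        * cinner (ws ! i) (ws ! j)"
      using ij wsc[OF ij(1)] wsc[OF ij(2)] by (simp add: colW cinner_smult_left cinner_smult_right)
    also have "\<dots> = 1\<^sub>m n $$ (i, j)"
    proof (cases "i = j")
      case True
      have p: "nr i > 0" by (rule nrpos[OF ij(1)])
      have "cnj (1 / complex_of_real (sqrt (nr i))) * (1 / complex_of_real (sqrt (nr i))) * complex_of_real (nr i)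
          = complex_of_real ((1 / sqrt (nr i)) * (1 / sqrt (nr i)) * nr i)"
        by (simp only: complex_cnj_divide complex_cnj_one complex_cnj_complex_of_real of_real_mult of_real_divide of_real_1)
      also have "(1 / sqrt (nr i)) * (1 / sqrt (nr i)) * nr i = 1"
        using p by (simp add: field_simps)
      finally show ?thesis using True ij by (simp add: inner)
    next
      case False
      then show ?thesis using ij by (simp add: inner)
    qed
    finally show "(adj W * W) $$ (i, j) = 1\<^sub>m n $$ (i, j)" .
  qed (use W in auto)
  have WW': "W * adj W = 1\<^sub>m n" using mat_mult_left_right_inverse[OF adj_carrier[OF W] W WW] .
  have "col W 0 = (1 / complex_of_real (sqrt (nr 0))) \<cdot>\<^sub>v v" using colW[of 0] n ws0 by simp
  then show ?thesis using W WW WW' by blast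
qed

lemma sq_assoc: "A \<in> carrier_mat n n \<Longrightarrow> B \<in> carrier_mat n n \<Longrightarrow> C \<in> carrier_mat n n
  \<Longrightarrow> A * B * C = A * (B * C)"
  by (rule assoc_mult_mat)

lemma sq_mult: "A \<in> carrier_mat n n \<Longrightarrow> B \<in> carrier_mat n n \<Longrightarrow> A * B \<in> carrier_mat n n"
  by simp

theorem spectral:
  assumes "A \<in> carrier_mat n n" "adj A = A"
  shows "\<exists>U x. eigdec n A U x"
  using assms
proof (induction n arbitrary: A)
  case 0
  have "eigdec 0 A (1\<^sub>m 0) (\<lambda>_. 0)"
    using 0 unfolding eigdec_def by (auto intro!: eq_matI)
  then show ?case by blast
next
  case (Suc n)
  note A = Suc.prems(1) and herm = Suc.prems(2)
  let ?N = "Suc n"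
  obtain as where cp: "char_poly A = (\<Prod>a\<leftarrow>as. [:- a, 1:])" and las: "length as = ?N"
    using char_poly_factorized[OF A] by blast
  then obtain e rest where as: "as = e # rest" by (cases as) auto
  have "poly (char_poly A) e = 0" unfolding cp as by simp
  then have ev: "eigenvalue A e" using eigenvalue_root_char_poly[OF A] by simp
  define v where "v = find_eigenvector A e"
  have "eigenvector A v e" unfolding v_def by (rule find_eigenvector[OF A ev])
  then have v: "v \<in> carrier_vec ?N" and v0: "v \<noteq> 0\<^sub>v ?N" and Av: "A *\<^sub>v v = e \<cdot>\<^sub>v v"
    using A unfolding eigenvector_def by auto
  have e_real: "cnj e = e"
  proof -
    have "cinner v (A *\<^sub>v v) = e * cinner v v" using Av by (simp add: cinner_smult_right)
    moreover have "cinner v (A *\<^sub>v v) = cinner (A *\<^sub>v v) v" using cinner_mult_adj[OF A v v] herm by simp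
    moreover have "cinner (A *\<^sub>v v) v = cnj e * cinner v v" using Av v A by (simp add: cinner_smult_left)
    moreover have "cinner v v \<noteq> 0" using cinner_self_zero[OF v] v0 by auto
    ultimately show ?thesis by simp
  qed
  have eR: "e = complex_of_real (Re e)"
  proof -
    have "Im e = 0" using arg_cong[OF e_real, of Im] by simp
    then show ?thesis by (simp add: complex_eq_iff)
  qed
  obtain W c where W: "W \<in> carrier_mat ?N ?N" and WW: "adj W * W = 1\<^sub>m ?N"
    and WW': "W * adj W = 1\<^sub>m ?N" and cW: "col W 0 = c \<cdot>\<^sub>v v"
    using orthonormal_basis[OF v v0] by blast
  have colWc: "col W i \<in> carrier_vec ?N" for i using W col_dim[of W i] by simp
  have AW0: "A *\<^sub>v col W 0 = e \<cdot>\<^sub>v col W 0"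
    unfolding cW mult_mat_vec[OF A v] Av smult_smult_assoc by (simp only: mult.commute)
  define A' where "A' = adj W * A * W"
  have A'c: "A' \<in> carrier_mat ?N ?N" unfolding A'_def
    by (rule mult_carrier_mat[OF mult_carrier_mat[OF adj_carrier[OF W] A] W])
  have A'e: "A' $$ (i, j) = cinner (col W i) (A *\<^sub>v col W j)" if ij: "i < ?N" "j < ?N" for i j
  proof -
    have "A' = adj W * (A * W)" unfolding A'_def using W A by (intro assoc_mult_mat) auto
    then have "A' $$ (i, j) = cinner (col W i) (col (A * W) j)"
      using adjmult_entry[OF W mult_carrier_mat[OF A W] ij] by simp
    also have "col (A * W) j = A *\<^sub>v col W j" by (rule col_mult2[OF A W ij(2)])
    finally show ?thesis .
  qed
  have ortho: "cinner (col W i) (col W j) = (if i = j then 1 else 0)" if ij: "i < ?N" "j < ?N" for i j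
    using arg_cong[OF WW, of "\<lambda>M. M $$ (i, j)"] adjmult_entry[OF W W ij] ij by simp
  have A'0: "A' $$ (i, 0) = (if i = 0 then e else 0)" if i: "i < ?N" for i
    using A'e[OF i, of 0] AW0 ortho[OF i, of 0] by (simp add: cinner_smult_right)
  have A'0': "A' $$ (0, j) = (if j = 0 then e else 0)" if j: "j < ?N" for j
  proof -
    have "A' $$ (0, j) = cinner (A *\<^sub>v col W 0) (col W j)"
      using A'e[OF _ j, of 0] cinner_mult_adj[OF A colWc colWc] herm by simp
    also have "\<dots> = cnj e * cinner (col W 0) (col W j)"
      unfolding AW0 using W by (simp add: cinner_smult_left)
    finally show ?thesis using ortho[OF _ j, of 0] e_real by simp
  qed
  have A'herm: "A' $$ (i, j) = cnj (A' $$ (j, i))" if ij: "i < ?N" "j < ?N" for i j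
  proof -
    have "A' $$ (i, j) = cinner (A *\<^sub>v col W i) (col W j)"
      using A'e[OF ij] cinner_mult_adj[OF A colWc colWc] herm by simp
    also have "\<dots> = cnj (cinner (col W j) (A *\<^sub>v col W i))"
      using A W by (intro cinner_cnj) auto
    finally show ?thesis using A'e[OF ij(2,1)] by simp
  qed
  define B where "B = mat n n (\<lambda>(i, j). A' $$ (Suc i, Suc j))"
  have Bc: "B \<in> carrier_mat n n" by (simp add: B_def)
  have Bh: "adj B = B" by (rule eq_matI) (auto simp: B_def A'herm[symmetric])
  from Suc.IH[OF Bc Bh] obtain V y where "eigdec n B V y" by blast
  then have V: "V \<in> carrier_mat n n" and VV: "adj V * V = 1\<^sub>m n" and VV': "V * adj V = 1\<^sub>m n"
    and BV: "B = V * diagm n y * adj V" unfolding eigdec_def by auto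
  have VVe: "(\<Sum>k<n. cnj (V $$ (k, i)) * V $$ (k, j)) = (if i = j then 1 else 0)"
    if "i < n" "j < n" for i j
    using arg_cong[OF VV, of "\<lambda>M. M $$ (i, j)"] adjU_U_entry[OF V that] that by simp
  have VV'e: "(\<Sum>k<n. V $$ (i, k) * cnj (V $$ (j, k))) = (if i = j then 1 else 0)"
    if "i < n" "j < n" for i j
    using arg_cong[OF VV', of "\<lambda>M. M $$ (i, j)"] U_adjU_entry[OF V that] that by simp
  have BVe: "(\<Sum>k<n. V $$ (i, k) * y k * cnj (V $$ (j, k))) = A' $$ (Suc i, Suc j)"
    if "i < n" "j < n" for i j
    using arg_cong[OF BV, of "\<lambda>M. M $$ (i, j)"] dec_entry[OF V that] that by (simp add: B_def)
  define E where "E = mat ?N ?N (\<lambda>(i, j). if i = 0 then (if j = 0 then 1 else 0)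
      else if j = 0 then 0 else V $$ (i - 1, j - 1))"
  define x where "x k = (if k = 0 then Re e else y (k - 1))" for k
  have Ec: "E \<in> carrier_mat ?N ?N" by (simp add: E_def)
  have EE: "adj E * E = 1\<^sub>m ?N"
  proof (rule eq_matI)
    fix i j assume "i < dim_row (1\<^sub>m ?N)" "j < dim_col (1\<^sub>m ?N)"
    then have ij: "i < ?N" "j < ?N" by auto
    have "(adj E * E) $$ (i, j) = (\<Sum>k<?N. cnj (E $$ (k, i)) * E $$ (k, j))"
      by (rule adjU_U_entry[OF Ec ij])
    also have "\<dots> = cnj (E $$ (0, i)) * E $$ (0, j) + (\<Sum>k<n. cnj (E $$ (Suc k, i)) * E $$ (Suc k, j))"
      by (rule sum.lessThan_Suc_shift)
    also have "\<dots> = 1\<^sub>m ?N $$ (i, j)"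
    proof (cases i)
      case 0 then show ?thesis using ij by (cases j) (auto simp: E_def)
    next
      case (Suc i') then show ?thesis using ij VVe[of i'] by (cases j) (auto simp: E_def)
    qed
    finally show "(adj E * E) $$ (i, j) = 1\<^sub>m ?N $$ (i, j)" .
  qed (use Ec in auto)
  have EE': "E * adj E = 1\<^sub>m ?N" using mat_mult_left_right_inverse[OF adj_carrier[OF Ec] Ec EE] .
  have A'E: "A' = E * diagm ?N x * adj E"
  proof (rule eq_matI)
    fix i j assume "i < dim_row (E * diagm ?N x * adj E)" "j < dim_col (E * diagm ?N x * adj E)"
    then have ij: "i < ?N" "j < ?N" using Ec by auto
    have "(E * diagm ?N x * adj E) $$ (i, j) = (\<Sum>k<?N. E $$ (i, k) * x k * cnj (E $$ (j, k)))"
      by (rule dec_entry[OF Ec ij])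
    also have "\<dots> = E $$ (i, 0) * x 0 * cnj (E $$ (j, 0)) + (\<Sum>k<n. E $$ (i, Suc k) * x (Suc k) * cnj (E $$ (j, Suc k)))"
      by (rule sum.lessThan_Suc_shift)
    also have "\<dots> = A' $$ (i, j)"
    proof (cases i)
      case 0 then show ?thesis using ij A'0' eR by (cases j) (auto simp: E_def x_def)
    next
      case (Suc i') then show ?thesis using ij A'0 BVe[of i'] by (cases j) (auto simp: E_def x_def)
    qed
    finally show "A' $$ (i, j) = (E * diagm ?N x * adj E) $$ (i, j)" by simp
  qed (use A'c Ec in auto)
  define U where "U = W * E"
  have Uc: "U \<in> carrier_mat ?N ?N" using W Ec by (simp add: U_def)
  have adjU: "adj U = adj E * adj W" unfolding U_def by (rule adj_mult[OF W Ec])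
  have aW: "adj W \<in> carrier_mat ?N ?N" using W by simp
  have aE: "adj E \<in> carrier_mat ?N ?N" using Ec by simp
  have Dc: "diagm ?N x \<in> carrier_mat ?N ?N" by simp
  note simps = sq_assoc[of _ ?N] sq_mult[of _ ?N] W Ec aW aE A Dc
  have UU: "adj U * U = 1\<^sub>m ?N"
  proof -
    have "adj U * U = adj E * (adj W * W * E)"
      unfolding adjU unfolding U_def by (simp add: simps)
    then show ?thesis using WW EE Ec by simp
  qed
  have UU': "U * adj U = 1\<^sub>m ?N"
  proof -
    have "U * adj U = W * (E * adj E * adj W)"
      unfolding adjU unfolding U_def by (simp add: simps)
    then show ?thesis using WW' EE' W aW by simp
  qed
  have AA: "A = W * A' * adj W"
  proof -
    have "W * A' * adj W = (W * adj W) * A * (W * adj W)"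
      unfolding A'_def by (simp add: simps)
    then show ?thesis using WW' A by simp
  qed
  have "A = U * diagm ?N x * adj U"
    unfolding AA A'E adjU unfolding U_def by (simp add: simps)
  then have "eigdec ?N A U x" using Uc UU UU' by (simp add: eigdec_def)
  then show ?case by blast
qed

lemma adjvec_entry:
  assumes U: "U \<in> carrier_mat n n" and v: "v \<in> carrier_vec n" and k: "k < n"
  shows "(adj U *\<^sub>v v) $ k = cinner (col U k) v"
  using assms by (simp add: scalar_prod_def cinner_def atLeast0LessThan)

lemma cinner_diag:
  assumes z: "z \<in> carrier_vec n"
  shows "cinner z (diagm n x *\<^sub>v z) = (\<Sum>k<n. complex_of_real (x k * (cmod (z $ k))\<^sup>2))"
proof -
  have "cinner z (diagm n x *\<^sub>v z) = (\<Sum>k<n. cnj (z $ k) * (\<Sum>l<n. diagm n x $$ (k, l) * z $ l))"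
    using z by (simp add: cinner_def scalar_prod_def atLeast0LessThan)
  also have "\<dots> = (\<Sum>k<n. cnj (z $ k) * (complex_of_real (x k) * z $ k))"
  proof (intro sum.cong refl)
    fix k assume k: "k \<in> {..<n}"
    have "(\<Sum>l<n. diagm n x $$ (k, l) * z $ l) = (\<Sum>l<n. if l = k then complex_of_real (x k) * z $ k else 0)"
      using k by (intro sum.cong) (auto simp: diagm_def)
    also have "\<dots> = complex_of_real (x k) * z $ k" using k by simp
    finally show "cnj (z $ k) * (\<Sum>l<n. diagm n x $$ (k, l) * z $ l) = cnj (z $ k) * (complex_of_real (x k) * z $ k)" by simp
  qed
  also have "\<dots> = (\<Sum>k<n. complex_of_real (x k * (cmod (z $ k))\<^sup>2))"
    by (intro sum.cong refl) (simp add: complex_mult_cnj mult_ac cmod_def)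
  finally show ?thesis .
qed

lemma qf:
  assumes d: "eigdec n A U x" and v: "v \<in> carrier_vec n"
  shows "cinner v (A *\<^sub>v v) = (\<Sum>k<n. complex_of_real (x k * (cmod (cinner (col U k) v))\<^sup>2))"
proof -
  from d have U: "U \<in> carrier_mat n n" and A: "A = U * diagm n x * adj U" by (auto simp: eigdec_def)
  let ?z = "adj U *\<^sub>v v"
  have z: "?z \<in> carrier_vec n" using mult_mat_vec_carrier[OF adj_carrier[OF U] v] .
  have "A *\<^sub>v v = U *\<^sub>v (diagm n x *\<^sub>v ?z)"
    unfolding A assoc_mult_mat_vec[OF mult_carrier_mat[OF U diagm_carrier] adj_carrier[OF U] v]
      assoc_mult_mat_vec[OF U diagm_carrier z] ..
  then have "cinner v (A *\<^sub>v v) = cinner ?z (diagm n x *\<^sub>v ?z)"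
    using cinner_mult_adj[OF U v mult_mat_vec_carrier[OF diagm_carrier z]] by simp
  also have "\<dots> = (\<Sum>k<n. complex_of_real (x k * (cmod (?z $ k))\<^sup>2))" by (rule cinner_diag[OF z])
  also have "\<dots> = (\<Sum>k<n. complex_of_real (x k * (cmod (cinner (col U k) v))\<^sup>2))"
    using adjvec_entry[OF U v] by simp
  finally show ?thesis .
qed

lemma nrm:
  assumes d: "eigdec n A U x" and v: "v \<in> carrier_vec n"
  shows "vnorm2 v = (\<Sum>k<n. (cmod (cinner (col U k) v))\<^sup>2)"
proof -
  from d have U: "U \<in> carrier_mat n n" and UU': "U * adj U = 1\<^sub>m n" by (auto simp: eigdec_def)
  let ?z = "adj U *\<^sub>v v"
  have z: "?z \<in> carrier_vec n" using mult_mat_vec_carrier[OF adj_carrier[OF U] v] .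
  have "v = U *\<^sub>v ?z"
    using U v UU' by (simp add: assoc_mult_mat_vec[of _ n n _ n, symmetric])
  then have "cinner v v = cinner ?z ?z"
    using cinner_mult_adj[OF U v z] by simp
  then have "vnorm2 v = Re (cinner ?z ?z)" unfolding vnorm2_def by simp
  also have "\<dots> = (\<Sum>k<n. (cmod (?z $ k))\<^sup>2)"
    by (simp only: cinner_self Re_complex_of_real carrier_vecD[OF z])
  also have "\<dots> = (\<Sum>k<n. (cmod (cinner (col U k) v))\<^sup>2)"
    using adjvec_entry[OF U v] by simp
  finally show ?thesis .
qed

lemma coords_of_image:
  assumes d: "eigdec n A U x" and c: "c \<in> carrier_vec n" and k: "k < n"
  shows "cinner (col U k) (U *\<^sub>v c) = c $ k"
proof -
  from d have U: "U \<in> carrier_mat n n" and UU: "adj U * U = 1\<^sub>m n" by (auto simp: eigdec_def)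
  have "adj U *\<^sub>v (U *\<^sub>v c) = c"
    using U c UU by (simp add: assoc_mult_mat_vec[of _ n n _ n, symmetric])
  then show ?thesis using adjvec_entry[OF U _ k, of "U *\<^sub>v c"] U c by simp
qed

lemma cinner_image:
  assumes U: "U \<in> carrier_mat n n" and c: "c \<in> carrier_vec n" and g: "g \<in> carrier_vec n"
  shows "cinner g (U *\<^sub>v c) = (\<Sum>j<n. cinner g (col U j) * c $ j)"
proof -
  have "cinner g (U *\<^sub>v c) = (\<Sum>i<n. cnj (g $ i) * (\<Sum>j<n. U $$ (i, j) * c $ j))"
    using assms by (simp add: cinner_def scalar_prod_def atLeast0LessThan)
  also have "\<dots> = (\<Sum>i<n. \<Sum>j<n. cnj (g $ i) * U $$ (i, j) * c $ j)"
    by (simp add: sum_distrib_left mult.assoc)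
  also have "\<dots> = (\<Sum>j<n. \<Sum>i<n. cnj (g $ i) * U $$ (i, j) * c $ j)" by (rule sum.swap)
  also have "\<dots> = (\<Sum>j<n. cinner g (col U j) * c $ j)"
    using assms by (simp add: cinner_def sum_distrib_right)
  finally show ?thesis .
qed

lemma Re_qf:
  assumes d: "eigdec n A U x" and v: "v \<in> carrier_vec n"
  shows "Re (cinner v (A *\<^sub>v v)) = (\<Sum>k<n. x k * (cmod (cinner (col U k) v))\<^sup>2)"
  unfolding qf[OF d v] Re_sum by simp

lemma upper_bound:
  assumes d: "eigdec n A U x" and v: "v \<in> carrier_vec n"
    and z: "\<And>k. k < n \<Longrightarrow> t < x k \<Longrightarrow> cinner (col U k) v = 0"
  shows "Re (cinner v (A *\<^sub>v v)) \<le> t * vnorm2 v"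
proof -
  have "Re (cinner v (A *\<^sub>v v)) = (\<Sum>k<n. x k * (cmod (cinner (col U k) v))\<^sup>2)"
    by (rule Re_qf[OF d v])
  also have "\<dots> \<le> (\<Sum>k<n. t * (cmod (cinner (col U k) v))\<^sup>2)"
  proof (rule sum_mono)
    fix k assume k: "k \<in> {..<n}"
    show "x k * (cmod (cinner (col U k) v))\<^sup>2 \<le> t * (cmod (cinner (col U k) v))\<^sup>2"
    proof (cases "t < x k")
      case True then show ?thesis using z k by simp
    next
      case False then show ?thesis by (intro mult_right_mono) auto
    qed
  qed
  also have "\<dots> = t * vnorm2 v" unfolding nrm[OF d v] by (simp add: sum_distrib_left)
  finally show ?thesis .
qed

lemma find_vec:
  assumes d: "eigdec n A U x" and I: "finite I" and g: "\<And>i. i \<in> I \<Longrightarrow> g i \<in> carrier_vec n"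
    and card: "card I < card {j. j < n \<and> t < x j}"
  shows "\<exists>v\<in>carrier_vec n. Re (cinner v (A *\<^sub>v v)) > t * vnorm2 v \<and> (\<forall>i\<in>I. cinner (g i) v = 0)"
proof -
  define J where "J = {j. j < n \<and> t < x j}"
  have J: "finite J" "J \<subseteq> {..<n}" by (auto simp: J_def)
  from d have U: "U \<in> carrier_mat n n" by (simp add: eigdec_def)
  obtain c where c: "\<exists>j\<in>J. c j \<noteq> 0"
    and ceq: "\<forall>i\<in>I. (\<Sum>j\<in>J. cinner (g i) (col U j) * c j) = 0"
    using linsys[OF I J(1) card[folded J_def], of "\<lambda>i j. cinner (g i) (col U j)"] by blast
  define cv where "cv = vec n (\<lambda>j. if j \<in> J then c j else 0)"
  have cv: "cv \<in> carrier_vec n" by (simp add: cv_def)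
  define v where "v = U *\<^sub>v cv"
  have v: "v \<in> carrier_vec n" using U cv by (simp add: v_def)
  have zk: "cinner (col U k) v = cv $ k" if "k < n" for k
    unfolding v_def by (rule coords_of_image[OF d cv that])
  have orth: "cinner (g i) v = 0" if i: "i \<in> I" for i
  proof -
    have "cinner (g i) v = (\<Sum>j<n. cinner (g i) (col U j) * cv $ j)"
      unfolding v_def by (rule cinner_image[OF U cv g[OF i]])
    also have "\<dots> = (\<Sum>j<n. if j \<in> J then cinner (g i) (col U j) * c j else 0)"
      by (intro sum.cong) (auto simp: cv_def)
    also have "\<dots> = (\<Sum>j\<in>{..<n} \<inter> J. cinner (g i) (col U j) * c j)"
      by (simp add: sum.inter_restrict)
    also have "{..<n} \<inter> J = J" using J by auto
    finally show ?thesis using ceq i by simp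
  qed
  have q: "Re (cinner v (A *\<^sub>v v)) = (\<Sum>k<n. x k * (cmod (cv $ k))\<^sup>2)"
    unfolding Re_qf[OF d v] using zk by simp
  have nv: "vnorm2 v = (\<Sum>k<n. (cmod (cv $ k))\<^sup>2)"
    unfolding nrm[OF d v] using zk by simp
  obtain j0 where j0: "j0 \<in> J" "c j0 \<noteq> 0" using c by blast
  have "0 < (\<Sum>k<n. (x k - t) * (cmod (cv $ k))\<^sup>2)"
  proof (rule sum_pos2[of _ j0])
    show "j0 \<in> {..<n}" using j0 J by auto
    show "0 < (x j0 - t) * (cmod (cv $ j0))\<^sup>2" using j0 J by (auto simp: cv_def J_def)
    fix k assume "k \<in> {..<n}"
    then show "0 \<le> (x k - t) * (cmod (cv $ k))\<^sup>2" by (auto simp: cv_def J_def)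
  qed auto
  then have "t * vnorm2 v < Re (cinner v (A *\<^sub>v v))"
    unfolding q nv by (simp add: algebra_simps sum_subtractf sum_distrib_left)
  then show ?thesis using v orth by blast
qed

lemma count1:
  assumes dR: "eigdec n R Ur r" and dQ: "eigdec n Q Uq d"
    and le: "\<And>v. v \<in> carrier_vec n \<Longrightarrow> Re (cinner v (Q *\<^sub>v v)) \<le> Re (cinner v (R *\<^sub>v v))"
  shows "card {i. i < n \<and> t < d i} \<le> card {i. i < n \<and> t < r i}"
proof (rule ccontr)
  assume "\<not> ?thesis"
  then have c: "card {i. i < n \<and> t < r i} < card {i. i < n \<and> t < d i}" by simp
  from dR have Ur: "Ur \<in> carrier_mat n n" by (simp add: eigdec_def)
  have "\<exists>v\<in>carrier_vec n. Re (cinner v (Q *\<^sub>v v)) > t * vnorm2 v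
     \<and> (\<forall>i\<in>{i. i < n \<and> t < r i}. cinner (col Ur i) v = 0)"
    by (rule find_vec[OF dQ _ _ c]) (use Ur in auto)
  then obtain v where v: "v \<in> carrier_vec n" and gt: "Re (cinner v (Q *\<^sub>v v)) > t * vnorm2 v"
    and o: "\<forall>i\<in>{i. i < n \<and> t < r i}. cinner (col Ur i) v = 0" by blast
  have "Re (cinner v (R *\<^sub>v v)) \<le> t * vnorm2 v"
    using o by (intro upper_bound[OF dR v]) auto
  with gt le[OF v] show False by simp
qed

lemma count2:
  assumes dR: "eigdec n R Ur r" and dQ: "eigdec n Q Uq d" and a: "a \<in> carrier_vec n"
    and eq: "\<And>v. v \<in> carrier_vec n \<Longrightarrow>
      Re (cinner v (R *\<^sub>v v)) = Re (cinner v (Q *\<^sub>v v)) + (cmod (cinner a v))\<^sup>2"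
  shows "card {i. i < n \<and> t < r i} \<le> card {i. i < n \<and> t < d i} + 1"
proof (rule ccontr)
  assume "\<not> ?thesis"
  then have c0: "card {i. i < n \<and> t < d i} + 1 < card {i. i < n \<and> t < r i}" by simp
  let ?I = "insert n {i. i < n \<and> t < d i}"
  have "card ?I = card {i. i < n \<and> t < d i} + 1" by simp
  with c0 have c: "card ?I < card {i. i < n \<and> t < r i}" by simp
  from dQ have Uq: "Uq \<in> carrier_mat n n" by (simp add: eigdec_def)
  define g where "g i = (if i = n then a else col Uq i)" for i
  have g: "g i \<in> carrier_vec n" if "i \<in> ?I" for i using that a Uq by (auto simp: g_def)
  have "\<exists>v\<in>carrier_vec n. Re (cinner v (R *\<^sub>v v)) > t * vnorm2 v \<and> (\<forall>i\<in>?I. cinner (g i) v = 0)"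
    by (rule find_vec[OF dR _ _ c]) (use g in auto)
  then obtain v where v: "v \<in> carrier_vec n" and gt: "Re (cinner v (R *\<^sub>v v)) > t * vnorm2 v"
    and o: "\<forall>i\<in>?I. cinner (g i) v = 0" by blast
  have "Re (cinner v (Q *\<^sub>v v)) \<le> t * vnorm2 v"
    using o by (intro upper_bound[OF dQ v]) (auto simp: g_def)
  moreover have "cinner a v = 0" using o by (auto simp: g_def)
  ultimately show False using gt eq[OF v] by simp
qed

lemma proots_linear_list: "proots (\<Prod>a\<leftarrow>L. [:- a, 1:]) = mset (L :: complex list)"
proof (induction L)
  case Nil then show ?case by simp
next
  case (Cons a L)
  have nz: "(\<Prod>a\<leftarrow>L. [:- a, 1:]) \<noteq> 0" by (auto simp: prod_list_zero_iff)
  have e: "(\<Prod>a\<leftarrow>a # L. [:- a, 1:]) = [:- a, 1:] * (\<Prod>a\<leftarrow>L. [:- a, 1:])" by simp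
  have "proots (\<Prod>a\<leftarrow>a # L. [:- a, 1:]) = proots [:- a, 1:] + proots (\<Prod>a\<leftarrow>L. [:- a, 1:])"
    unfolding e by (rule proots_mult) (use nz in auto)
  also have "proots [:- a, 1:] = {#a#}" using proots_linear_factor[of "- a"] by simp
  finally show ?case using Cons by simp
qed

lemma eigdec_carrier: "eigdec n A U x \<Longrightarrow> A \<in> carrier_mat n n"
  unfolding eigdec_def by (auto intro!: mult_carrier_mat[of _ n n _ n] simp del: mult_carrier_mat)

lemma tr_pow_eigdec:
  assumes d: "eigdec n A U x"
  shows "tr_pow \<alpha> A = (\<Sum>i<n. x i powr \<alpha>)"
proof -
  from d have U: "U \<in> carrier_mat n n" and UU: "adj U * U = 1\<^sub>m n" and UU': "U * adj U = 1\<^sub>m n"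
    and AU: "A = U * diagm n x * adj U" by (auto simp: eigdec_def)
  have A: "A \<in> carrier_mat n n" by (rule eigdec_carrier[OF d])
  have "similar_mat_wit A (diagm n x) U (adj U)"
    unfolding similar_mat_wit_def Let_def using A U UU UU' AU by auto
  then have "similar_mat A (diagm n x)" unfolding similar_mat_def by blast
  then have "char_poly A = char_poly (diagm n x)" by (rule char_poly_similar)
  also have "\<dots> = (\<Prod>a\<leftarrow>diag_mat (diagm n x). [:- a, 1:])"
    by (rule char_poly_upper_triangular[OF diagm_carrier]) (auto simp: upper_triangular_def diagm_def)
  also have "diag_mat (diagm n x) = map (\<lambda>i. complex_of_real (x i)) [0..<n]"
    by (auto simp: diag_mat_def diagm_def)
  finally have cpA: "char_poly A = (\<Prod>a\<leftarrow>map (\<lambda>i. complex_of_real (x i)) [0..<n]. [:- a, 1:])" .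
  have "proots (char_poly A) = mset (map (\<lambda>i. complex_of_real (x i)) [0..<n])"
    unfolding cpA by (rule proots_linear_list)
  then have "tr_pow \<alpha> A = sum_list (map (\<lambda>z. Re z powr \<alpha>) (map (\<lambda>i. complex_of_real (x i)) [0..<n]))"
    unfolding tr_pow_def by (simp only: mset_map[symmetric] sum_mset_sum_list)
  also have "\<dots> = (\<Sum>i<n. x i powr \<alpha>)"
    by (simp add: sum_list_sum_nth atLeast0LessThan)
  finally show ?thesis .
qed

lemma trace_eigdec:
  assumes d: "eigdec n A U x"
  shows "(\<Sum>i<n. A $$ (i, i)) = complex_of_real (\<Sum>k<n. x k)"
proof -
  from d have U: "U \<in> carrier_mat n n" and UU: "adj U * U = 1\<^sub>m n"
    and AU: "A = U * diagm n x * adj U" by (auto simp: eigdec_def)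
  have col: "(\<Sum>i<n. cnj (U $$ (i, k)) * U $$ (i, k)) = 1" if k: "k < n" for k
    using arg_cong[OF UU, of "\<lambda>M. M $$ (k, k)"] adjU_U_entry[OF U k k] k by simp
  have "(\<Sum>i<n. A $$ (i, i)) = (\<Sum>i<n. \<Sum>k<n. U $$ (i, k) * x k * cnj (U $$ (i, k)))"
    unfolding AU by (rule sum.cong[OF refl], rule dec_entry[OF U]) auto
  also have "\<dots> = (\<Sum>k<n. \<Sum>i<n. U $$ (i, k) * x k * cnj (U $$ (i, k)))" by (rule sum.swap)
  also have "\<dots> = (\<Sum>k<n. complex_of_real (x k) * (\<Sum>i<n. cnj (U $$ (i, k)) * U $$ (i, k)))"
    by (simp add: sum_distrib_left mult_ac)
  also have "\<dots> = (\<Sum>k<n. complex_of_real (x k))" using col by simp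
  finally show ?thesis by simp
qed

lemma sum_reindex_nm:
  fixes n m :: nat and f :: "nat \<Rightarrow> 'a::comm_monoid_add"
  shows "(\<Sum>k<n*m. f k) = (\<Sum>i<n. \<Sum>j<m. f (i*m+j))"
proof (induction n)
  case 0 then show ?case by simp
next
  case (Suc n)
  have "(\<Sum>k<Suc n * m. f k) = (\<Sum>k\<in>{0..<n*m}. f k) + (\<Sum>k\<in>{n*m..<n*m+m}. f k)"
    by (simp add: atLeast0LessThan[symmetric] sum.atLeastLessThan_concat add.commute)
  also have "(\<Sum>k\<in>{n*m..<n*m+m}. f k) = (\<Sum>j<m. f (n*m+j))"
    using sum.shift_bounds_nat_ivl[of f 0 "n*m" m]
    by (simp add: atLeast0LessThan add.commute)
  finally show ?case using Suc by (simp add: atLeast0LessThan)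
qed

lemma idx_lt: "i < n \<Longrightarrow> j < (m::nat) \<Longrightarrow> i * m + j < n * m"
proof -
  assume "i < n" "j < m"
  then have "i * m + j < i * m + m" by simp
  also have "\<dots> = (i + 1) * m" by simp
  also have "\<dots> \<le> n * m" using \<open>i < n\<close> by (intro mult_right_mono) auto
  finally show ?thesis .
qed

lemma idx_div: "j < (m::nat) \<Longrightarrow> (i * m + j) div m = i" by simp
lemma idx_mod: "j < (m::nat) \<Longrightarrow> (i * m + j) mod m = j" by simp

lemma ptrace_carrier[simp]: "ptrace_B_outer n m u v \<in> carrier_mat n n"
  by (simp add: ptrace_B_outer_def)

lemma ptrace_dims[simp]: "dim_row (ptrace_B_outer n m u v) = n" "dim_col (ptrace_B_outer n m u v) = n"
  by (auto simp: ptrace_B_outer_def)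

lemma re_mult_cnj_nonneg: "0 \<le> Re (z * cnj z)"
  by simp

lemma ptrace_entry: "i < n \<Longrightarrow> i' < n \<Longrightarrow>
  ptrace_B_outer n m u v $$ (i, i') = (\<Sum>j<m. u $ (i * m + j) * cnj (v $ (i' * m + j)))"
  by (simp add: ptrace_B_outer_def)

lemma ptrace_herm: "adj (ptrace_B_outer n m u u) = ptrace_B_outer n m u u"
  by (rule eq_matI) (auto simp: ptrace_entry mult.commute)

lemma ptrace_trace:
  assumes u: "u \<in> carrier_vec (n * m)"
  shows "(\<Sum>i<n. ptrace_B_outer n m u u $$ (i, i)) = complex_of_real (vnorm2 u)"
proof -
  have "(\<Sum>i<n. ptrace_B_outer n m u u $$ (i, i)) = (\<Sum>i<n. \<Sum>j<m. u $ (i * m + j) * cnj (u $ (i * m + j)))"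
    by (simp add: ptrace_entry)
  also have "\<dots> = (\<Sum>k<n*m. u $ k * cnj (u $ k))" by (rule sum_reindex_nm[symmetric])
  also have "\<dots> = cinner u u" using u by (simp add: cinner_def mult.commute)
  also have "\<dots> = complex_of_real (vnorm2 u)" by (rule cinner_self_real)
  finally show ?thesis .
qed

lemma ptrace_qf:
  assumes v: "v \<in> carrier_vec n"
  shows "cinner v (ptrace_B_outer n m u u *\<^sub>v v) =
    (\<Sum>j<m. (\<Sum>i<n. cnj (v $ i) * u $ (i * m + j)) * cnj (\<Sum>i<n. cnj (v $ i) * u $ (i * m + j)))"
proof -
  have "cinner v (ptrace_B_outer n m u u *\<^sub>v v) =
     (\<Sum>i<n. cnj (v $ i) * (\<Sum>i'<n. (\<Sum>j<m. u $ (i * m + j) * cnj (u $ (i' * m + j))) * v $ i'))"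
    using v by (simp add: cinner_def scalar_prod_def atLeast0LessThan ptrace_entry)
  also have "\<dots> = (\<Sum>i<n. \<Sum>i'<n. \<Sum>j<m. cnj (v $ i) * u $ (i * m + j) * (cnj (u $ (i' * m + j)) * v $ i'))"
    by (simp add: sum_distrib_left sum_distrib_right mult_ac)
  also have "\<dots> = (\<Sum>i<n. \<Sum>j<m. \<Sum>i'<n. cnj (v $ i) * u $ (i * m + j) * (cnj (u $ (i' * m + j)) * v $ i'))"
    by (intro sum.cong refl sum.swap)
  also have "\<dots> = (\<Sum>j<m. \<Sum>i<n. \<Sum>i'<n. cnj (v $ i) * u $ (i * m + j) * (cnj (u $ (i' * m + j)) * v $ i'))"
    by (rule sum.swap)
  also have "\<dots> = (\<Sum>j<m. (\<Sum>i<n. cnj (v $ i) * u $ (i * m + j)) * cnj (\<Sum>i<n. cnj (v $ i) * u $ (i * m + j)))"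
    by (simp add: sum_distrib_left sum_distrib_right mult_ac)
  finally show ?thesis .
qed

lemma ptrace_psd:
  assumes v: "v \<in> carrier_vec n"
  shows "Re (cinner v (ptrace_B_outer n m u u *\<^sub>v v)) \<ge> 0"
  unfolding ptrace_qf[OF v] Re_sum
  by (intro sum_nonneg) (rule re_mult_cnj_nonneg)

lemma vtensor_carrier[simp]: "u \<in> carrier_vec n \<Longrightarrow> v \<in> carrier_vec m \<Longrightarrow> vtensor u v \<in> carrier_vec (n * m)"
  by (simp add: vtensor_def)

lemma vtensor_entry:
  assumes "u \<in> carrier_vec n" "v \<in> carrier_vec m" "i < n" "j < m"
  shows "vtensor u v $ (i * m + j) = u $ i * v $ j"
  using assms idx_lt[of i n j m] by (simp add: vtensor_def)

lemma contract_carrier[simp]: "contract_B n b w \<in> carrier_vec n"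
  by (simp add: contract_B_def)

lemma contract_entry:
  assumes "b \<in> carrier_vec m" "i < n"
  shows "contract_B n b w $ i = (\<Sum>j<m. cnj (b $ j) * w $ (i * m + j))"
  using assms by (simp add: contract_B_def)

lemma cinner_add_right: "dim_vec v = dim_vec w \<Longrightarrow> cinner u (v + w) = cinner u v + cinner u w"
  by (simp add: cinner_def sum.distrib algebra_simps)

lemma cinner_add_left: "dim_vec u = dim_vec v \<Longrightarrow> dim_vec w = dim_vec v \<Longrightarrow> cinner (u + v) w = cinner u w + cinner v w"
  by (simp add: cinner_def sum.distrib algebra_simps)

lemma qf_rank1_plus:
  assumes M: "M \<in> carrier_mat n n" and K: "K \<in> carrier_mat n n" and g: "g \<in> carrier_vec n"
    and v: "v \<in> carrier_vec n"
    and ent: "\<And>i i'. i < n \<Longrightarrow> i' < n \<Longrightarrow> M $$ (i, i') = g $ i * cnj (g $ i') + c * K $$ (i, i')"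
  shows "cinner v (M *\<^sub>v v) = cinner v g * cinner g v + c * cinner v (K *\<^sub>v v)"
proof -
  have "cinner v (M *\<^sub>v v) = (\<Sum>i<n. cnj (v $ i) * (\<Sum>i'<n. M $$ (i, i') * v $ i'))"
    using M v by (simp add: cinner_def scalar_prod_def atLeast0LessThan)
  also have "\<dots> = (\<Sum>i<n. cnj (v $ i) * (\<Sum>i'<n. (g $ i * cnj (g $ i') + c * K $$ (i, i')) * v $ i'))"
    using ent by (intro sum.cong refl) simp
  also have "\<dots> = (\<Sum>i<n. cnj (v $ i) * g $ i * (\<Sum>i'<n. cnj (g $ i') * v $ i')
      + c * (cnj (v $ i) * (\<Sum>i'<n. K $$ (i, i') * v $ i')))"
  proof (intro sum.cong refl)
    fix i assume "i \<in> {..<n}"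
    have "(\<Sum>i'<n. (g $ i * cnj (g $ i') + c * K $$ (i, i')) * v $ i')
      = (\<Sum>i'<n. g $ i * (cnj (g $ i') * v $ i') + c * (K $$ (i, i') * v $ i'))"
      by (intro sum.cong refl) (simp add: algebra_simps)
    also have "\<dots> = g $ i * (\<Sum>i'<n. cnj (g $ i') * v $ i') + c * (\<Sum>i'<n. K $$ (i, i') * v $ i')"
      by (simp add: sum.distrib sum_distrib_left)
    finally show "cnj (v $ i) * (\<Sum>i'<n. (g $ i * cnj (g $ i') + c * K $$ (i, i')) * v $ i')
      = cnj (v $ i) * g $ i * (\<Sum>i'<n. cnj (g $ i') * v $ i') + c * (cnj (v $ i) * (\<Sum>i'<n. K $$ (i, i') * v $ i'))"
      by (simp add: algebra_simps)
  qed
  also have "\<dots> = (\<Sum>i<n. cnj (v $ i) * g $ i) * (\<Sum>i'<n. cnj (g $ i') * v $ i')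
      + c * (\<Sum>i<n. cnj (v $ i) * (\<Sum>i'<n. K $$ (i, i') * v $ i'))"
    by (simp only: sum.distrib sum_distrib_right[symmetric] sum_distrib_left[symmetric])
  also have "\<dots> = cinner v g * cinner g v + c * cinner v (K *\<^sub>v v)"
    using K v g by (simp add: cinner_def scalar_prod_def atLeast0LessThan)
  finally show ?thesis .
qed

lemma re_cnj_mult: "Re (cnj z * z) = (cmod z)\<^sup>2"
proof -
  have "(cmod z)\<^sup>2 = (Re z)\<^sup>2 + (Im z)\<^sup>2" by (rule cmod_power2)
  then show ?thesis by (simp add: power2_eq_square)
qed

context
  fixes n m :: nat and a0 b0 \<phi> x y :: "complex vec" and \<epsilon> :: real
  assumes a0: "a0 \<in> carrier_vec n" and b0: "b0 \<in> carrier_vec m"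
    and ph: "\<phi> \<in> carrier_vec (n * m)" and na0: "vnorm2 a0 = 1" and nb0: "vnorm2 b0 = 1"
    and nph: "vnorm2 \<phi> = 1"
    and xd: "contract_B n b0 \<phi> = x" and yd: "\<phi> - vtensor x b0 = y" and y0: "y \<noteq> 0\<^sub>v (n * m)"
    and e0: "0 < \<epsilon>"
begin

lemma x_carrier: "x \<in> carrier_vec n" using xd by auto

lemma x_entry: "i < n \<Longrightarrow> x $ i = (\<Sum>j<m. cnj (b0 $ j) * \<phi> $ (i * m + j))"
  using contract_entry[OF b0, of i n \<phi>] xd by auto

lemma y_carrier: "y \<in> carrier_vec (n * m)"
  using yd ph x_carrier b0 by auto

lemma y_entry: "i < n \<Longrightarrow> j < m \<Longrightarrow> y $ (i * m + j) = \<phi> $ (i * m + j) - x $ i * b0 $ j"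
proof -
  assume i: "i < n" and j: "j < m"
  have d: "dim_vec (vtensor x b0) = n * m" using x_carrier b0 by (simp add: vtensor_def)
  have "y $ (i * m + j) = \<phi> $ (i * m + j) - vtensor x b0 $ (i * m + j)"
    unfolding yd[symmetric] using idx_lt[OF i j] d by simp
  then show ?thesis using vtensor_entry[OF x_carrier b0 i j] by simp
qed

lemma b0_norm: "(\<Sum>j<m. cnj (b0 $ j) * b0 $ j) = 1"
proof -
  have "cinner b0 b0 = 1" using cinner_self_real[of b0] nb0 by simp
  then show ?thesis using b0 by (simp add: cinner_def)
qed

lemma contract_y: "i < n \<Longrightarrow> (\<Sum>j<m. cnj (b0 $ j) * y $ (i * m + j)) = 0"
proof -
  assume i: "i < n"
  have "(\<Sum>j<m. cnj (b0 $ j) * y $ (i * m + j))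
      = (\<Sum>j<m. cnj (b0 $ j) * \<phi> $ (i * m + j) - x $ i * (cnj (b0 $ j) * b0 $ j))"
  proof (intro sum.cong refl)
    fix j assume "j \<in> {..<m}"
    then show "cnj (b0 $ j) * y $ (i * m + j) = cnj (b0 $ j) * \<phi> $ (i * m + j) - x $ i * (cnj (b0 $ j) * b0 $ j)"
      using i by (subst y_entry) (auto simp: algebra_simps)
  qed
  also have "\<dots> = x $ i - x $ i * (\<Sum>j<m. cnj (b0 $ j) * b0 $ j)"
    using i by (simp add: sum_subtractf sum_distrib_left x_entry)
  also have "\<dots> = 0" by (simp add: b0_norm)
  finally show ?thesis .
qed

definition "aa = a0 + complex_of_real \<epsilon> \<cdot>\<^sub>v x"
definition "ww = vtensor a0 b0 + complex_of_real \<epsilon> \<cdot>\<^sub>v \<phi>"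

lemma aa_carrier: "aa \<in> carrier_vec n" using a0 x_carrier by (simp add: aa_def)

lemma aa_entry: "i < n \<Longrightarrow> aa $ i = a0 $ i + complex_of_real \<epsilon> * x $ i"
  using a0 x_carrier by (simp add: aa_def)

lemma ww_carrier: "ww \<in> carrier_vec (n * m)" using a0 b0 ph by (simp add: ww_def)

lemma ww_entry: "i < n \<Longrightarrow> j < m \<Longrightarrow>
  ww $ (i * m + j) = aa $ i * b0 $ j + complex_of_real \<epsilon> * y $ (i * m + j)"
proof -
  assume i: "i < n" and j: "j < m"
  have Y: "y $ (i * m + j) = \<phi> $ (i * m + j) - x $ i * b0 $ j" by (rule y_entry[OF i j])
  have V: "vtensor a0 b0 $ (i * m + j) = a0 $ i * b0 $ j" by (rule vtensor_entry[OF a0 b0 i j])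
  have "ww $ (i * m + j) = vtensor a0 b0 $ (i * m + j) + complex_of_real \<epsilon> * \<phi> $ (i * m + j)"
    using idx_lt[OF i j] a0 b0 ph by (simp add: ww_def)
  then show ?thesis unfolding V Y aa_entry[OF i] by (simp add: algebra_simps)
qed

lemma ptrace_ww:
  assumes i: "i < n" and i': "i' < n"
  shows "ptrace_B_outer n m ww ww $$ (i, i') = aa $ i * cnj (aa $ i')
    + complex_of_real (\<epsilon>\<^sup>2) * ptrace_B_outer n m y y $$ (i, i')"
proof -
  let ?A = "aa $ i" and ?A' = "aa $ i'" and ?e = "complex_of_real \<epsilon>"
  have "ptrace_B_outer n m ww ww $$ (i, i') = (\<Sum>j<m. ww $ (i * m + j) * cnj (ww $ (i' * m + j)))"
    using i i' by (simp add: ptrace_entry)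
  also have "\<dots> = (\<Sum>j<m. ?A * cnj ?A' * (cnj (b0 $ j) * b0 $ j)
      + ?e * ?A * cnj (cnj (b0 $ j) * y $ (i' * m + j))
      + ?e * cnj ?A' * (cnj (b0 $ j) * y $ (i * m + j))
      + complex_of_real (\<epsilon>\<^sup>2) * (y $ (i * m + j) * cnj (y $ (i' * m + j))))"
  proof (intro sum.cong refl)
    fix j assume "j \<in> {..<m}"
    then have j: "j < m" by simp
    show "ww $ (i * m + j) * cnj (ww $ (i' * m + j)) = ?A * cnj ?A' * (cnj (b0 $ j) * b0 $ j)
      + ?e * ?A * cnj (cnj (b0 $ j) * y $ (i' * m + j))
      + ?e * cnj ?A' * (cnj (b0 $ j) * y $ (i * m + j))
      + complex_of_real (\<epsilon>\<^sup>2) * (y $ (i * m + j) * cnj (y $ (i' * m + j)))"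
      unfolding ww_entry[OF i j] ww_entry[OF i' j] by (simp add: algebra_simps power2_eq_square)
  qed
  also have "\<dots> = ?A * cnj ?A' * (\<Sum>j<m. cnj (b0 $ j) * b0 $ j)
      + ?e * ?A * cnj (\<Sum>j<m. cnj (b0 $ j) * y $ (i' * m + j))
      + ?e * cnj ?A' * (\<Sum>j<m. cnj (b0 $ j) * y $ (i * m + j))
      + complex_of_real (\<epsilon>\<^sup>2) * (\<Sum>j<m. y $ (i * m + j) * cnj (y $ (i' * m + j)))"
    by (simp add: sum.distrib sum_distrib_left)
  also have "\<dots> = ?A * cnj ?A' + complex_of_real (\<epsilon>\<^sup>2) * ptrace_B_outer n m y y $$ (i, i')"
    using i i' by (simp add: b0_norm contract_y ptrace_entry)
  finally show ?thesis .
qed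

lemma a0_norm: "(\<Sum>i<n. cnj (a0 $ i) * a0 $ i) = 1"
proof -
  have "cinner a0 a0 = 1" using cinner_self_real[of a0] na0 by simp
  then show ?thesis using a0 by (simp add: cinner_def)
qed

lemma e_norm: "cinner (vtensor a0 b0) (vtensor a0 b0) = 1"
proof -
  have "cinner (vtensor a0 b0) (vtensor a0 b0) = (\<Sum>k<n*m. cnj (vtensor a0 b0 $ k) * vtensor a0 b0 $ k)"
    using carrier_vecD[OF vtensor_carrier[OF a0 b0]] by (simp add: cinner_def)
  also have "\<dots> = (\<Sum>i<n. \<Sum>j<m. cnj (vtensor a0 b0 $ (i*m+j)) * vtensor a0 b0 $ (i*m+j))"
    by (rule sum_reindex_nm)
  also have "\<dots> = (\<Sum>i<n. \<Sum>j<m. (cnj (a0 $ i) * a0 $ i) * (cnj (b0 $ j) * b0 $ j))"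
    by (intro sum.cong refl) (simp add: vtensor_entry[OF a0 b0] mult_ac)
  also have "\<dots> = (\<Sum>i<n. cnj (a0 $ i) * a0 $ i) * (\<Sum>j<m. cnj (b0 $ j) * b0 $ j)"
    by (simp add: sum_product)
  finally show ?thesis by (simp add: a0_norm b0_norm)
qed

lemma vnorm2_ww: "vnorm2 ww = 1 + \<epsilon>\<^sup>2 + 2 * \<epsilon> * Re (cinner (vtensor a0 b0) \<phi>)"
proof -
  let ?e = "vtensor a0 b0" and ?c = "complex_of_real \<epsilon>"
  have de: "dim_vec ?e = n * m" using a0 b0 by simp
  have dp: "dim_vec \<phi> = n * m" using ph by simp
  have "cinner ww ww = cinner ?e ?e + ?c * cinner ?e \<phi> + cnj ?c * cinner \<phi> ?e + cnj ?c * ?c * cinner \<phi> \<phi>"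
    unfolding ww_def using de dp
    by (simp add: cinner_add_left cinner_add_right cinner_smult_left cinner_smult_right algebra_simps)
  moreover have "cinner \<phi> ?e = cnj (cinner ?e \<phi>)" using de dp by (intro cinner_cnj) simp
  moreover have "cinner \<phi> \<phi> = 1" using cinner_self_real[of \<phi>] nph by simp
  ultimately have "cinner ww ww = 1 + ?c * cinner ?e \<phi> + ?c * cnj (cinner ?e \<phi>) + ?c * ?c"
    using e_norm by simp
  then show ?thesis unfolding vnorm2_def by (simp add: power2_eq_square)
qed

lemma vnorm2_nonneg: "vnorm2 u \<ge> 0"
  unfolding vnorm2_def cinner_self by (simp add: sum_nonneg)

lemma norm_y_pos: "vnorm2 y > 0"
proof (rule ccontr)
  assume "\<not> vnorm2 y > 0"
  then have "vnorm2 y = 0" using vnorm2_nonneg[of y] by simp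
  then have "cinner y y = 0" using cinner_self_real[of y] by simp
  then have "y = 0\<^sub>v (n * m)" by (rule cinner_self_zero[OF y_carrier])
  with y0 show False by simp
qed

lemma ww_norm_decomp:
  "vnorm2 ww = (\<Sum>i<n. Re (aa $ i * cnj (aa $ i))) + \<epsilon>\<^sup>2 * vnorm2 y"
proof -
  have "complex_of_real (vnorm2 ww) = (\<Sum>i<n. ptrace_B_outer n m ww ww $$ (i, i))"
    using ptrace_trace[OF ww_carrier] by simp
  also have "\<dots> = (\<Sum>i<n. aa $ i * cnj (aa $ i)) + complex_of_real (\<epsilon>\<^sup>2) * (\<Sum>i<n. ptrace_B_outer n m y y $$ (i, i))"
    by (simp add: ptrace_ww sum.distrib sum_distrib_left)
  also have "(\<Sum>i<n. ptrace_B_outer n m y y $$ (i, i)) = complex_of_real (vnorm2 y)"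
    by (rule ptrace_trace[OF y_carrier])
  finally have "complex_of_real (vnorm2 ww) = (\<Sum>i<n. aa $ i * cnj (aa $ i)) + complex_of_real (\<epsilon>\<^sup>2 * vnorm2 y)"
    by simp
  from arg_cong[OF this, of Re] show ?thesis by (simp add: Re_sum)
qed

lemma ww_pos: "vnorm2 ww > 0"
proof -
  have "(\<Sum>i<n. Re (aa $ i * cnj (aa $ i))) \<ge> 0" by (intro sum_nonneg) simp
  moreover have "\<epsilon>\<^sup>2 * vnorm2 y > 0" using e0 norm_y_pos by simp
  ultimately show ?thesis unfolding ww_norm_decomp by simp
qed

lemma core:
  assumes Nd: "N = 1 + \<epsilon>^2 + 2 * \<epsilon> * Re (cinner (vtensor a0 b0) \<phi>)"
    and psid: "\<psi> = (complex_of_real (1 / sqrt N)) \<cdot>\<^sub>v (vtensor a0 b0 + complex_of_real \<epsilon> \<cdot>\<^sub>v \<phi>)"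
    and rhod: "\<rho>A = ptrace_B_outer n m \<psi> \<psi>"
    and mud: "\<mu> = \<epsilon>^2 * vnorm2 y / N"
    and omd: "\<omega> = (complex_of_real (1 / vnorm2 y)) \<cdot>\<^sub>m ptrace_B_outer n m y y"
    and a1: "0 < \<alpha>" and a2: "\<alpha> < 1"
  shows "\<mu> powr \<alpha> * tr_pow \<alpha> \<omega> \<le> tr_pow \<alpha> \<rho>A
       \<and> tr_pow \<alpha> \<rho>A \<le> (1 - \<mu>) powr \<alpha> + \<mu> powr \<alpha> * tr_pow \<alpha> \<omega>
       \<and> renyi \<alpha> \<omega> + \<alpha> / (1 - \<alpha>) * ln \<mu> \<le> renyi \<alpha> \<rho>A
       \<and> renyi \<alpha> \<rho>A \<le> ln ((1 - \<mu>) powr \<alpha> + \<mu> powr \<alpha> * exp ((1 - \<alpha>) * renyi \<alpha> \<omega>)) / (1 - \<alpha>)"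
proof -
  let ?P = "ptrace_B_outer n m y y"
  define ny where "ny = vnorm2 y"
  have ny: "ny > 0" using norm_y_pos by (simp add: ny_def)
  have NN: "N = vnorm2 ww" using vnorm2_ww Nd by simp
  have N0: "N > 0" using ww_pos NN by simp
  define c where "c = complex_of_real (1 / sqrt N)"
  have psi: "\<psi> = c \<cdot>\<^sub>v ww" unfolding psid c_def ww_def ..
  have cc: "c * cnj c = complex_of_real (1 / N)"
  proof -
    have "c * cnj c = complex_of_real (1 / sqrt N * (1 / sqrt N))"
      by (simp only: c_def complex_cnj_complex_of_real of_real_mult)
    also have s: "sqrt N * sqrt N = N" using N0 by simp
    have "1 / sqrt N * (1 / sqrt N) = 1 / (sqrt N * sqrt N)" by simp
    also note s
    finally show ?thesis .
  qed
  have psi_e: "\<psi> $ k = c * ww $ k" if "k < n * m" for k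
    using that ww_carrier by (simp add: psi)
  have rho_e: "\<rho>A $$ (i, i') = complex_of_real (1 / N) * ptrace_B_outer n m ww ww $$ (i, i')"
    if ii: "i < n" "i' < n" for i i'
  proof -
    have "\<rho>A $$ (i, i') = (\<Sum>j<m. \<psi> $ (i * m + j) * cnj (\<psi> $ (i' * m + j)))"
      unfolding rhod using ii by (simp add: ptrace_entry)
    also have "\<dots> = (\<Sum>j<m. (c * cnj c) * (ww $ (i * m + j) * cnj (ww $ (i' * m + j))))"
    proof (intro sum.cong refl)
      fix j assume "j \<in> {..<m}"
      then have "i * m + j < n * m" "i' * m + j < n * m" using ii idx_lt by auto
      then show "\<psi> $ (i * m + j) * cnj (\<psi> $ (i' * m + j)) = (c * cnj c) * (ww $ (i * m + j) * cnj (ww $ (i' * m + j)))"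
        by (simp add: psi_e mult_ac)
    qed
    also have "\<dots> = complex_of_real (1 / N) * ptrace_B_outer n m ww ww $$ (i, i')"
      using ii by (simp add: cc ptrace_entry sum_distrib_left)
    finally show ?thesis .
  qed
  define g where "g = c \<cdot>\<^sub>v aa"
  have g: "g \<in> carrier_vec n" using aa_carrier by (simp add: g_def)
  have om_e: "\<omega> $$ (i, i') = complex_of_real (1 / ny) * ?P $$ (i, i')" if "i < n" "i' < n" for i i'
    using that by (simp add: omd ny_def)
  have rho_dec: "\<rho>A $$ (i, i') = g $ i * cnj (g $ i') + complex_of_real \<mu> * \<omega> $$ (i, i')"
    if ii: "i < n" "i' < n" for i i'
  proof -
    have "\<rho>A $$ (i, i') = complex_of_real (1 / N) * (aa $ i * cnj (aa $ i'))
        + complex_of_real (\<epsilon>\<^sup>2 / N) * ?P $$ (i, i')"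
      using ii by (simp add: rho_e ptrace_ww algebra_simps)
    also have "complex_of_real (1 / N) * (aa $ i * cnj (aa $ i')) = g $ i * cnj (g $ i')"
    proof -
      have "g $ i * cnj (g $ i') = (c * cnj c) * (aa $ i * cnj (aa $ i'))"
        using ii aa_carrier by (simp add: g_def mult_ac)
      then show ?thesis by (simp only: cc)
    qed
    also have "complex_of_real (\<epsilon>\<^sup>2 / N) = complex_of_real \<mu> * complex_of_real (1 / ny)"
      using ny by (simp add: mud ny_def)
    finally show ?thesis using om_e[OF ii] by (simp add: mult_ac)
  qed
  have rhoC: "\<rho>A \<in> carrier_mat n n" by (simp add: rhod)
  have omC: "\<omega> \<in> carrier_mat n n" by (simp add: omd)
  have rhoH: "adj \<rho>A = \<rho>A" unfolding rhod by (rule ptrace_herm)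
  have omH: "adj \<omega> = \<omega>"
  proof (rule eq_matI)
    fix i j assume "i < dim_row \<omega>" "j < dim_col \<omega>"
    then have ij: "i < n" "j < n" using omC by auto
    have "?P $$ (i, j) = cnj (?P $$ (j, i))"
      by (rule herm_entry[OF ptrace_carrier ptrace_herm ij])
    then show "adj \<omega> $$ (i, j) = \<omega> $$ (i, j)"
      using ij omC by (simp add: om_e)
  qed (use omC in auto)
  obtain Uw w where dw: "eigdec n \<omega> Uw w" using spectral[OF omC omH] by blast
  obtain Ur r where dr: "eigdec n \<rho>A Ur r" using spectral[OF rhoC rhoH] by blast
  have Uw: "Uw \<in> carrier_mat n n" using dw by (simp add: eigdec_def)
  have sw: "(\<Sum>k<n. w k) = 1"
  proof -
    have "complex_of_real (\<Sum>k<n. w k) = (\<Sum>i<n. \<omega> $$ (i, i))" using trace_eigdec[OF dw] by simp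
    also have "\<dots> = complex_of_real (1 / ny) * (\<Sum>i<n. ?P $$ (i, i))"
      by (simp add: om_e sum_distrib_left)
    also have "\<dots> = complex_of_real (1 / ny * ny)"
      using ptrace_trace[OF y_carrier] by (simp add: ny_def)
    also have "\<dots> = 1" using ny by simp
    finally show ?thesis by (metis of_real_eq_1_iff)
  qed
  have sr: "(\<Sum>k<n. r k) = 1"
  proof -
    have "complex_of_real (\<Sum>k<n. r k) = (\<Sum>i<n. \<rho>A $$ (i, i))" using trace_eigdec[OF dr] by simp
    also have "\<dots> = complex_of_real (1 / N) * (\<Sum>i<n. ptrace_B_outer n m ww ww $$ (i, i))"
      by (simp add: rho_e sum_distrib_left)
    also have "\<dots> = complex_of_real (1 / N * N)"
      using ptrace_trace[OF ww_carrier] NN by simp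
    also have "\<dots> = 1" using N0 by simp
    finally show ?thesis by (metis of_real_eq_1_iff)
  qed
  have qom: "cinner v (\<omega> *\<^sub>v v) = complex_of_real (1 / ny) * cinner v (?P *\<^sub>v v)"
    if v: "v \<in> carrier_vec n" for v
    using qf_rank1_plus[OF omC ptrace_carrier zero_carrier_vec v, of "complex_of_real (1 / ny)"] om_e
    by (simp add: cinner_def)
  have psd: "Re (cinner v (\<omega> *\<^sub>v v)) \<ge> 0" if v: "v \<in> carrier_vec n" for v
    using ptrace_psd[OF v, of m y] ny by (simp add: qom[OF v])
  have w0: "w k \<ge> 0" if k: "k < n" for k
  proof -
    let ?v = "Uw *\<^sub>v unit_vec n k"
    have v: "?v \<in> carrier_vec n" using Uw by simp
    have "Re (cinner ?v (\<omega> *\<^sub>v ?v)) = (\<Sum>j<n. w j * (cmod (unit_vec n k $ j))\<^sup>2)"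
      unfolding Re_qf[OF dw v] using coords_of_image[OF dw, of "unit_vec n k"] by simp
    also have "\<dots> = (\<Sum>j<n. if j = k then w k else 0)"
      using k by (intro sum.cong refl) auto
    also have "\<dots> = w k" using k by simp
    finally show ?thesis using psd[OF v] by simp
  qed
  have qrho: "Re (cinner v (\<rho>A *\<^sub>v v)) = (cmod (cinner g v))\<^sup>2 + \<mu> * Re (cinner v (\<omega> *\<^sub>v v))"
    if v: "v \<in> carrier_vec n" for v
  proof -
    have "cinner v (\<rho>A *\<^sub>v v) = cinner v g * cinner g v + complex_of_real \<mu> * cinner v (\<omega> *\<^sub>v v)"
      by (rule qf_rank1_plus[OF rhoC omC g v rho_dec])
    moreover have "cinner v g = cnj (cinner g v)" using v g by (intro cinner_cnj) simp
    moreover have "Re (cinner g v) * Re (cinner g v) + Im (cinner g v) * Im (cinner g v)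
        = cmod (cinner g v) * cmod (cinner g v)"
      using re_cnj_mult[of "cinner g v"] by (simp add: power2_eq_square)
    ultimately show ?thesis by (simp add: power2_eq_square)
  qed
  have mu0: "\<mu> > 0" using ny N0 e0 by (simp add: mud ny_def[symmetric])
  define d where "d k = \<mu> * w k" for k
  have dd: "eigdec n (Uw * diagm n d * adj Uw) Uw d" using dw by (simp add: eigdec_def)
  have qQ: "Re (cinner v ((Uw * diagm n d * adj Uw) *\<^sub>v v)) = \<mu> * Re (cinner v (\<omega> *\<^sub>v v))"
    if v: "v \<in> carrier_vec n" for v
    unfolding Re_qf[OF dd v] Re_qf[OF dw v] by (simp add: d_def sum_distrib_left mult_ac)
  have C1: "card {i. i < n \<and> t < d i} \<le> card {i. i < n \<and> t < r i}" for t
    by (rule count1[OF dr dd]) (simp add: qQ qrho)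
  have C2: "card {i. i < n \<and> t < r i} \<le> card {i. i < n \<and> t < d i} + 1" for t
    by (rule count2[OF dr dd g]) (simp add: qQ qrho)
  have d0: "0 \<le> d i" if "i < n" for i using w0[OF that] mu0 by (simp add: d_def)
  note S = scalar_main[OF d0 C1 C2 a1 a2]
  have Td: "(\<Sum>i<n. d i powr \<alpha>) = \<mu> powr \<alpha> * tr_pow \<alpha> \<omega>"
    unfolding tr_pow_eigdec[OF dw] using w0 mu0 by (simp add: d_def powr_mult sum_distrib_left)
  have Tr: "tr_pow \<alpha> \<rho>A = (\<Sum>i<n. r i powr \<alpha>)" by (rule tr_pow_eigdec[OF dr])
  have diff: "(\<Sum>i<n. r i) - (\<Sum>i<n. d i) = 1 - \<mu>"
    using sr sw by (simp add: d_def sum_distrib_left[symmetric])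
  have I1: "\<mu> powr \<alpha> * tr_pow \<alpha> \<omega> \<le> tr_pow \<alpha> \<rho>A" using S(1) Td Tr by simp
  have I2: "tr_pow \<alpha> \<rho>A \<le> (1 - \<mu>) powr \<alpha> + \<mu> powr \<alpha> * tr_pow \<alpha> \<omega>"
    using S(2) Td Tr diff by simp
  have Tw: "tr_pow \<alpha> \<omega> > 0"
  proof -
    obtain k where k: "k < n" "w k > 0"
    proof (rule ccontr)
      assume "\<not> thesis"
      then have "\<forall>k<n. w k \<le> 0" using that by force
      then have "(\<Sum>k<n. w k) \<le> 0" by (intro sum_nonpos) auto
      with sw show False by simp
    qed
    have "(\<Sum>i<n. w i powr \<alpha>) > 0"
      using k w0 by (intro sum_pos2[of _ k]) auto
    then show ?thesis unfolding tr_pow_eigdec[OF dw] .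
  qed
  have Tl: "\<mu> powr \<alpha> * tr_pow \<alpha> \<omega> > 0" using Tw mu0 by simp
  have Trp: "tr_pow \<alpha> \<rho>A > 0" using Tl I1 by simp
  have a3: "1 - \<alpha> > 0" using a2 by simp
  have R3: "renyi \<alpha> \<omega> + \<alpha> / (1 - \<alpha>) * ln \<mu> \<le> renyi \<alpha> \<rho>A"
  proof -
    have "ln (\<mu> powr \<alpha> * tr_pow \<alpha> \<omega>) \<le> ln (tr_pow \<alpha> \<rho>A)"
      using I1 Tl Trp by simp
    moreover have "ln (\<mu> powr \<alpha> * tr_pow \<alpha> \<omega>) = \<alpha> * ln \<mu> + ln (tr_pow \<alpha> \<omega>)"
      using mu0 Tw by (simp add: ln_mult ln_powr)
    ultimately have "(ln (tr_pow \<alpha> \<omega>) + \<alpha> * ln \<mu>) / (1 - \<alpha>) \<le> ln (tr_pow \<alpha> \<rho>A) / (1 - \<alpha>)"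
      using a3 by (intro divide_right_mono) auto
    then show ?thesis using a3 by (simp add: renyi_def add_divide_distrib)
  qed
  have R4: "renyi \<alpha> \<rho>A \<le> ln ((1 - \<mu>) powr \<alpha> + \<mu> powr \<alpha> * exp ((1 - \<alpha>) * renyi \<alpha> \<omega>)) / (1 - \<alpha>)"
  proof -
    have "exp ((1 - \<alpha>) * renyi \<alpha> \<omega>) = tr_pow \<alpha> \<omega>"
      using a3 Tw by (simp add: renyi_def)
    moreover have "ln (tr_pow \<alpha> \<rho>A) \<le> ln ((1 - \<mu>) powr \<alpha> + \<mu> powr \<alpha> * tr_pow \<alpha> \<omega>)"
      using I2 Trp by simp
    ultimately show ?thesis using a3 by (simp add: renyi_def divide_right_mono)
  qed
  show ?thesis using I1 I2 R3 R4 by blast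
qed

end

theorem mainTheorem3:
  fixes n m :: nat and a0 b0 \<phi> :: "complex vec" and \<epsilon> \<alpha> :: real
  assumes "n > 0" and "m > 0"
    and "a0 \<in> carrier_vec n" and "b0 \<in> carrier_vec m" and "\<phi> \<in> carrier_vec (n * m)"
    and "vnorm2 a0 = 1" and "vnorm2 b0 = 1" and "vnorm2 \<phi> = 1"
    and "contract_B n b0 \<phi> = x"
    and "\<phi> - vtensor x b0 = y"
    and "y \<noteq> 0\<^sub>v (n * m)"
    and "0 < \<epsilon>" and "\<epsilon> < 1"
    and "\<N> = 1 + \<epsilon>^2 + 2 * \<epsilon> * Re (cinner (vtensor a0 b0) \<phi>)"
    and "\<psi> = (complex_of_real (1 / sqrt \<N>)) \<cdot>\<^sub>v (vtensor a0 b0 + complex_of_real \<epsilon> \<cdot>\<^sub>v \<phi>)"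
    and "\<rho>A = ptrace_B_outer n m \<psi> \<psi>"
    and "\<mu> = \<epsilon>^2 * vnorm2 y / \<N>"
    and "\<omega> = (complex_of_real (1 / vnorm2 y)) \<cdot>\<^sub>m ptrace_B_outer n m y y"
    and "0 < \<alpha>" and "\<alpha> < 1"
  shows "\<mu> powr \<alpha> * tr_pow \<alpha> \<omega> \<le> tr_pow \<alpha> \<rho>A
       \<and> tr_pow \<alpha> \<rho>A \<le> (1 - \<mu>) powr \<alpha> + \<mu> powr \<alpha> * tr_pow \<alpha> \<omega>
       \<and> renyi \<alpha> \<omega> + \<alpha> / (1 - \<alpha>) * ln \<mu> \<le> renyi \<alpha> \<rho>A
       \<and> renyi \<alpha> \<rho>A \<le> ln ((1 - \<mu>) powr \<alpha> + \<mu> powr \<alpha> * exp ((1 - \<alpha>) * renyi \<alpha> \<omega>)) / (1 - \<alpha>)"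
  by (rule core[OF assms(3-12) assms(14-20)])

end
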